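(* Let $X$ be a pure $d$-dimensional weighted simplicial complex with $d\ge2$, whose 1-skeleton is connected and such that for every vertex $v\in X(0)$ the 1-skeleton of the link $X_v$ is connected. Let $\lambda\in(0,1]$ and suppose that for every vertex $v\in X(0)$, every nonzero eigenvalue of the Laplacian $L_v=I-A_v$ of the 1-skeleton of $X_v$ is at least $\lambda$. Then every nonzero eigenvalue of the Laplacian $L=I-A$ of the 1-skeleton of $X$ is at least $2-\frac1\lambda$.
   Context: A pure $d$-dimensional simplicial complex $X$ is a finite family of finite sets closed under taking subsets, all of whose maximal members have $d+1$ elements; $X(i)$ denotes the set of faces with $i+1$ elements. A weighted complex is equipped with a probability distribution $\Pi$ on $X(d)$; the weight of $\tau\in X(i)$ is $w(\tau)=\binom{d+1}{i+1}^{-1}\sum_{\sigma\in X(d),\,\sigma\supseteq\tau}\Pi(\sigma)$. The link of $\tau$ is $X_\tau=\{\sigma\setminus\tau:\ \tau\subseteq\sigma\in X\}$, weighted by the distribution $\Pi_\tau(\eta)=\Pi(\eta\cup\tau)/\sum_{\sigma\in X(d),\sigma\supseteq\tau}\Pi(\sigma)$ on its top faces, with induced weights $w_\tau$ defined by the same formula. For a weighted complex $Y$ of dimension $\ge1$, its normalized adjacency operator $A$ acts on $f:Y(0)\to\mathbb R$ by $(Af)(v)=\sum_{u:\{u,v\}\in Y(1)}\frac{w(\{v,u\})}{2w(v)}f(u)$; it is self-adjoint with respect to $\langle f,g\rangle=\sum_v w(v)f(v)g(v)$. The Laplacian is $I-A$; its eigenvalues are real and lie in $[0,2]$, and $0$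 is an eigenvalue with the constant functions as eigenvectors. $A_v$ denotes the adjacency operator of the 1-skeleton of $X_v$ with the link weights $w_v$. *)

theory Defs
  imports Complex_Main
begin

definition pure_complex :: "'a set set \<Rightarrow> nat \<Rightarrow> bool" where
  "pure_complex X d \<longleftrightarrow> finite X \<and> (\<forall>\<sigma>\<in>X. finite \<sigma>) \<and>
     (\<forall>\<sigma>\<in>X. \<forall>\<tau>. \<tau> \<subseteq> \<sigma> \<longrightarrow> \<tau> \<in> X) \<and>
     (\<forall>\<sigma>\<in>X. (\<forall>\<tau>\<in>X. \<sigma> \<subseteq> \<tau> \<longrightarrow> \<tau> = \<sigma>) \<longrightarrow> card \<sigma> = d + 1)"

definition faces :: "'a set set \<Rightarrow> nat \<Rightarrow> 'a set set" where
  "faces X i = {\<sigma>\<in>X. card \<sigma> = i + 1}"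

definition vertices :: "'a set set \<Rightarrow> 'a set" where
  "vertices X = {v. {v} \<in> X}"

definition prob_dist :: "'a set set \<Rightarrow> nat \<Rightarrow> ('a set \<Rightarrow> real) \<Rightarrow> bool" where
  "prob_dist X d \<Pi> \<longleftrightarrow> (\<forall>\<sigma>\<in>faces X d. \<Pi> \<sigma> > 0) \<and> (\<Sum>\<sigma>\<in>faces X d. \<Pi> \<sigma>) = 1"

definition weight :: "'a set set \<Rightarrow> nat \<Rightarrow> ('a set \<Rightarrow> real) \<Rightarrow> 'a set \<Rightarrow> real" where
  "weight X d \<Pi> \<tau> = (\<Sum>\<sigma>\<in>{\<sigma>\<in>faces X d. \<tau> \<subseteq> \<sigma>}. \<Pi> \<sigma>) / real ((d + 1) choose (card \<tau>))"

definition link :: "'a set set \<Rightarrow> 'a set \<Rightarrow> 'a set set" where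
  "link X \<tau> = {\<sigma> - \<tau> | \<sigma>. \<sigma> \<in> X \<and> \<tau> \<subseteq> \<sigma>}"

definition link_dist :: "'a set set \<Rightarrow> nat \<Rightarrow> ('a set \<Rightarrow> real) \<Rightarrow> 'a set \<Rightarrow> 'a set \<Rightarrow> real" where
  "link_dist X d \<Pi> \<tau> \<eta> = \<Pi> (\<eta> \<union> \<tau>) / (\<Sum>\<sigma>\<in>{\<sigma>\<in>faces X d. \<tau> \<subseteq> \<sigma>}. \<Pi> \<sigma>)"

definition adjacency :: "'a set set \<Rightarrow> nat \<Rightarrow> ('a set \<Rightarrow> real) \<Rightarrow> ('a \<Rightarrow> real) \<Rightarrow> 'a \<Rightarrow> real" where
  "adjacency Y k \<Pi> f v =
     (\<Sum>u\<in>{u. {u, v} \<in> faces Y 1}. weight Y k \<Pi> {v, u} / (2 * weight Y k \<Pi> {v}) * f u)"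

definition laplacian :: "'a set set \<Rightarrow> nat \<Rightarrow> ('a set \<Rightarrow> real) \<Rightarrow> ('a \<Rightarrow> real) \<Rightarrow> 'a \<Rightarrow> real" where
  "laplacian Y k \<Pi> f v = f v - adjacency Y k \<Pi> f v"

definition laplacian_eigenvalue :: "'a set set \<Rightarrow> nat \<Rightarrow> ('a set \<Rightarrow> real) \<Rightarrow> real \<Rightarrow> bool" where
  "laplacian_eigenvalue Y k \<Pi> \<mu> \<longleftrightarrow>
     (\<exists>f. (\<exists>v\<in>vertices Y. f v \<noteq> 0) \<and> (\<forall>v\<in>vertices Y. laplacian Y k \<Pi> f v = \<mu> * f v))"

definition skeleton_connected :: "'a set set \<Rightarrow> bool" where
  "skeleton_connected Y \<longleftrightarrow>
     (\<forall>u\<in>vertices Y. \<forall>v\<in>vertices Y. (\<lambda>a b. {a, b} \<in> faces Y 1)\<^sup>*\<^sup>* u v)"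

end

theory Submission
  imports Defs "HOL-Analysis.Analysis"
begin


lemma compact_box_fun:
  fixes S :: "'a set" and R :: real
  shows "compact (Pi\<^sub>E UNIV (\<lambda>i. if i \<in> S then {-R..R} else {0::real}))"
proof -
  have "compactin (product_topology (\<lambda>i. euclidean) UNIV) (Pi\<^sub>E UNIV (\<lambda>i. if i \<in> S then {-R..R} else {0::real}))"
    by (subst compactin_PiE) auto
  then show ?thesis by (simp add: euclidean_product_topology)
qed

lemma cont_sum_fun:
  fixes a :: "'a \<Rightarrow> real"
  shows "continuous_on UNIV (\<lambda>h::'a\<Rightarrow>real. \<Sum>u\<in>S. a u * (h u)^2)"
    "continuous_on UNIV (\<lambda>h::'a\<Rightarrow>real. \<Sum>u\<in>S. a u * h u)"
    "continuous_on UNIV (\<lambda>h::'a\<Rightarrow>real. \<Sum>u\<in>S. \<Sum>x\<in>S. K u x * h u * h x)"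
  by (intro continuous_intros continuous_on_product_coordinates)+

lemma exists_max:
  fixes S :: "'a set" and a :: "'a \<Rightarrow> real" and K
  assumes fin: "finite S" and apos: "\<forall>u\<in>S. a u > 0"
    and ne: "C \<noteq> {}"
    and Cdef: "C = {h. (\<forall>u. u \<notin> S \<longrightarrow> h u = 0) \<and> (\<Sum>u\<in>S. a u * (h u)^2) = 1 \<and> (\<Sum>u\<in>S. a u * h u) = 0}"
  shows "\<exists>h0\<in>C. \<forall>h\<in>C. (\<Sum>u\<in>S. \<Sum>x\<in>S. K u x * h u * h x) \<le> (\<Sum>u\<in>S. \<Sum>x\<in>S. K u x * h0 u * h0 x)"
proof -
  define R where "R = 1 + (\<Sum>u\<in>S. 1 / a u)"
  define B where "B = Pi\<^sub>E UNIV (\<lambda>i. if i \<in> S then {-R..R} else {0::real})"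
  have bound: "\<bar>h u\<bar> \<le> R" if "h \<in> C" "u \<in> S" for h u
  proof -
    have h1: "(\<Sum>u\<in>S. a u * (h u)^2) = 1" using that Cdef by auto
    have "a u * (h u)^2 \<le> (\<Sum>u\<in>S. a u * (h u)^2)"
      using fin that(2) apos by (intro member_le_sum) auto
    then have "a u * (h u)^2 \<le> 1" using h1 by simp
    then have hu: "(h u)^2 \<le> 1 / a u" using apos that(2) by (simp add: field_simps)
    have "1 / a u \<le> (\<Sum>u\<in>S. 1 / a u)"
      using fin that(2) apos by (intro member_le_sum) auto
    then have "(h u)^2 \<le> R - 1" unfolding R_def using hu by simp
    moreover have "\<bar>h u\<bar> \<le> 1 + (h u)^2"
    proof -
      have "0 \<le> (\<bar>h u\<bar> - 1)^2" by simp
      then show ?thesis by (simp add: power2_diff power2_abs) 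
    qed
    ultimately show ?thesis by linarith
  qed
  have CB: "C = B \<inter> {h. (\<Sum>u\<in>S. a u * (h u)^2) = 1} \<inter> {h. (\<Sum>u\<in>S. a u * h u) = 0}"
  proof (intro set_eqI iffI)
    fix h assume hC: "h \<in> C"
    have "\<forall>i. h i \<in> (if i \<in> S then {-R..R} else {0})"
    proof
      fix i show "h i \<in> (if i \<in> S then {-R..R} else {0})"
        using bound[OF hC, of i] hC Cdef by (cases "i \<in> S") (auto simp: abs_le_iff)
    qed
    then have "h \<in> B" unfolding B_def by (simp add: PiE_iff)
    then show "h \<in> B \<inter> {h. (\<Sum>u\<in>S. a u * (h u)^2) = 1} \<inter> {h. (\<Sum>u\<in>S. a u * h u) = 0}"
      using hC Cdef by auto
  next
    fix h assume "h \<in> B \<inter> {h. (\<Sum>u\<in>S. a u * (h u)^2) = 1} \<inter> {h. (\<Sum>u\<in>S. a u * h u) = 0}"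
    then show "h \<in> C" unfolding Cdef B_def by (auto simp: PiE_iff split: if_splits)
  qed
  have "compact C" unfolding CB
    apply (intro compact_Int_closed)
      apply (unfold B_def, rule compact_box_fun)
     apply (rule closed_Collect_eq, rule cont_sum_fun, simp)
    apply (rule closed_Collect_eq, rule cont_sum_fun, simp)
    done
  moreover have "continuous_on C (\<lambda>h. \<Sum>u\<in>S. \<Sum>x\<in>S. K u x * h u * h x)"
    using cont_sum_fun(3) continuous_on_subset by blast
  ultimately show ?thesis using continuous_attains_sup ne by blast
qed


definition QF :: "'a set \<Rightarrow> ('a\<Rightarrow>'a\<Rightarrow>real) \<Rightarrow> ('a\<Rightarrow>real) \<Rightarrow> real" where
  "QF S K g = (\<Sum>u\<in>S. \<Sum>x\<in>S. K u x * g u * g x)"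
definition BF :: "'a set \<Rightarrow> ('a\<Rightarrow>'a\<Rightarrow>real) \<Rightarrow> ('a\<Rightarrow>real) \<Rightarrow> ('a\<Rightarrow>real) \<Rightarrow> real" where
  "BF S K g h = (\<Sum>u\<in>S. \<Sum>x\<in>S. K u x * g u * h x)"
definition IP :: "'a set \<Rightarrow> ('a\<Rightarrow>real) \<Rightarrow> ('a\<Rightarrow>real) \<Rightarrow> ('a\<Rightarrow>real) \<Rightarrow> real" where
  "IP S a g h = (\<Sum>u\<in>S. a u * g u * h u)"

lemma BF_sym:
  assumes "\<forall>u\<in>S. \<forall>x\<in>S. K u x = K x u"
  shows "BF S K h g = BF S K g h"
proof -
  have "BF S K h g = (\<Sum>x\<in>S. \<Sum>u\<in>S. K u x * h u * g x)"
    unfolding BF_def by (rule sum.swap)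
  also have "\<dots> = BF S K g h" unfolding BF_def
    using assms by (intro sum.cong refl) (auto simp: mult_ac)
  finally show ?thesis .
qed

lemma QF_expand:
  assumes "\<forall>u\<in>S. \<forall>x\<in>S. K u x = K x u"
  shows "QF S K (\<lambda>u. g u + t * h u) = QF S K g + 2 * t * BF S K g h + t^2 * QF S K h"
proof -
  have "QF S K (\<lambda>u. g u + t * h u) = (\<Sum>u\<in>S. \<Sum>x\<in>S. K u x * g u * g x + t * (K u x * g u * h x) + t * (K u x * h u * g x) + t^2 * (K u x * h u * h x))"
    unfolding QF_def by (intro sum.cong refl) (simp add: algebra_simps power2_eq_square)
  also have "\<dots> = QF S K g + t * BF S K g h + t * BF S K h g + t^2 * QF S K h"
    unfolding QF_def BF_def by (simp add: sum.distrib sum_distrib_left)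
  finally show ?thesis using BF_sym[OF assms, of h g] by simp
qed

lemma IP_expand:
  "IP S a (\<lambda>u. g u + t * h u) (\<lambda>u. g u + t * h u) = IP S a g g + 2 * t * IP S a g h + t^2 * IP S a h h"
proof -
  have "IP S a (\<lambda>u. g u + t * h u) (\<lambda>u. g u + t * h u) = (\<Sum>u\<in>S. a u * g u * g u + 2 * t * (a u * g u * h u) + t^2 * (a u * h u * h u))"
    unfolding IP_def by (intro sum.cong refl) (simp add: algebra_simps power2_eq_square)
  also have "\<dots> = IP S a g g + 2 * t * IP S a g h + t^2 * IP S a h h"
    unfolding IP_def by (simp add: sum.distrib sum_distrib_left)
  finally show ?thesis .
qed

lemma quad_nonpos_lin_zero:
  fixes b c :: real
  assumes "\<forall>t. b * t + c * t^2 \<le> 0"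
  shows "b = 0"
proof (rule ccontr)
  assume "b \<noteq> 0"
  define D where "D = \<bar>c\<bar> + 1"
  define t where "t = b / D"
  have pos: "D > 0" unfolding D_def by simp
  have "b * t + c * t^2 \<le> 0" using assms by blast
  then have "(b * t + c * t^2) * D^2 \<le> 0"
    using pos by (simp add: mult_nonpos_nonneg)
  moreover have "(b * t + c * t^2) * D^2 = b^2 * (\<bar>c\<bar> + 1 + c)"
  proof -
    have "(b * t + c * t^2) * D^2 = b^2 * D + c * b^2"
      unfolding t_def using pos by (simp add: field_simps power2_eq_square)
    then show ?thesis unfolding D_def by (simp add: algebra_simps)
  qed
  moreover have "b^2 * (\<bar>c\<bar> + 1 + c) > 0" using \<open>b \<noteq> 0\<close>
    by (intro mult_pos_pos) auto
  ultimately show False by linarith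
qed



lemma IP_lin: "IP S a (\<lambda>u. g u + t * h u) k = IP S a g k + t * IP S a h k"
  unfolding IP_def by (simp add: algebra_simps sum.distrib sum_distrib_left)

lemma IP_sq: "IP S a h h = (\<Sum>u\<in>S. a u * (h u)^2)"
  unfolding IP_def by (simp add: power2_eq_square mult.assoc)

lemma IP_one: "IP S a h (\<lambda>_. 1) = (\<Sum>u\<in>S. a u * h u)"
  unfolding IP_def by simp

lemma IP_nonneg: assumes "\<forall>u\<in>S. a u > 0" shows "IP S a h h \<ge> 0"
  unfolding IP_sq using assms by (intro sum_nonneg) (simp add: less_imp_le)

lemma IP_zero:
  assumes "finite S" "\<forall>u\<in>S. a u > 0" "IP S a h h = 0" "u \<in> S"
  shows "h u = 0"
proof -
  have "\<forall>u\<in>S. a u * (h u)^2 = 0"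
    using assms(3) unfolding IP_sq
    using sum_nonneg_eq_0_iff[OF assms(1), of "\<lambda>u. a u * (h u)^2"] assms(2)
    by (simp add: less_imp_le)
  then have "a u * (h u)^2 = 0" using assms(4) by blast
  moreover have "a u \<noteq> 0" using assms(2,4) by fastforce
  ultimately show ?thesis by simp
qed

lemma normalize_in_C:
  assumes fin: "finite S" and apos: "\<forall>u\<in>S. a u > 0"
    and m: "IP S a z (\<lambda>_. 1) = 0" and n: "IP S a z z > 0"
  defines "zn \<equiv> (\<lambda>u. if u \<in> S then z u / sqrt (IP S a z z) else 0)"
  shows "(\<forall>u. u \<notin> S \<longrightarrow> zn u = 0) \<and> (\<Sum>u\<in>S. a u * (zn u)^2) = 1 \<and> (\<Sum>u\<in>S. a u * zn u) = 0"
    and "QF S K zn = QF S K z / IP S a z z"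
proof -
  define s where "s = sqrt (IP S a z z)"
  have s2: "s^2 = IP S a z z" unfolding s_def using n by simp
  have sp: "s > 0" unfolding s_def using n by simp
  have "(\<Sum>u\<in>S. a u * (zn u)^2) = (\<Sum>u\<in>S. a u * (z u)^2) / s^2"
    unfolding zn_def s_def[symmetric] by (simp add: sum_divide_distrib power_divide)
  also have "\<dots> = 1" using s2 n unfolding IP_sq by simp
  finally have 1: "(\<Sum>u\<in>S. a u * (zn u)^2) = 1" .
  have "(\<Sum>u\<in>S. a u * zn u) = (\<Sum>u\<in>S. a u * z u) / s"
    unfolding zn_def s_def[symmetric] by (simp add: sum_divide_distrib)
  also have "\<dots> = 0" using m unfolding IP_one by simp
  finally have 2: "(\<Sum>u\<in>S. a u * zn u) = 0" .
  show "(\<forall>u. u \<notin> S \<longrightarrow> zn u = 0) \<and> (\<Sum>u\<in>S. a u * (zn u)^2) = 1 \<and> (\<Sum>u\<in>S. a u * zn u) = 0"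
    using 1 2 unfolding zn_def by simp
  have "QF S K zn = (\<Sum>u\<in>S. \<Sum>x\<in>S. K u x * z u * z x / s^2)"
    unfolding QF_def zn_def s_def[symmetric] by (intro sum.cong refl) (simp add: power2_eq_square)
  also have "\<dots> = QF S K z / s^2" unfolding QF_def by (simp add: sum_divide_distrib)
  finally show "QF S K zn = QF S K z / IP S a z z" using s2 by simp
qed

lemma energy:
  assumes sym: "\<forall>u\<in>S. \<forall>x\<in>S. K u x = K x u" and row: "\<forall>u\<in>S. (\<Sum>x\<in>S. K u x) = a u"
  shows "(\<Sum>u\<in>S. \<Sum>x\<in>S. K u x * (g u - g x)^2) = 2 * IP S a g g - 2 * QF S K g"
proof -
  have A: "(\<Sum>u\<in>S. \<Sum>x\<in>S. K u x * (g u)^2) = IP S a g g"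
    unfolding IP_sq using row by (simp add: sum_distrib_right[symmetric])
  have "(\<Sum>u\<in>S. \<Sum>x\<in>S. K u x * (g x)^2) = (\<Sum>x\<in>S. \<Sum>u\<in>S. K u x * (g x)^2)"
    by (rule sum.swap)
  also have "\<dots> = (\<Sum>x\<in>S. \<Sum>u\<in>S. K x u * (g x)^2)"
    using sym by (intro sum.cong refl) auto
  finally have B: "(\<Sum>u\<in>S. \<Sum>x\<in>S. K u x * (g x)^2) = IP S a g g" using A by simp
  have "(\<Sum>u\<in>S. \<Sum>x\<in>S. K u x * (g u - g x)^2) =
        (\<Sum>u\<in>S. \<Sum>x\<in>S. K u x * (g u)^2 + K u x * (g x)^2 - 2 * (K u x * g u * g x))"
    by (intro sum.cong refl) (simp add: power2_diff algebra_simps)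
  also have "\<dots> = IP S a g g + IP S a g g - 2 * QF S K g"
    using A B unfolding QF_def by (simp add: sum.distrib sum_subtractf sum_distrib_left)
  finally show ?thesis by simp
qed

lemma max_claim:
  fixes S :: "'a set" and a :: "'a \<Rightarrow> real" and K :: "'a \<Rightarrow> 'a \<Rightarrow> real" and lam :: real
  assumes fin: "finite S" and apos: "\<forall>u\<in>S. a u > 0" and asum: "(\<Sum>u\<in>S. a u) = 1"
    and sym: "\<forall>u\<in>S. \<forall>x\<in>S. K u x = K x u" and nn: "\<forall>u\<in>S. \<forall>x\<in>S. K u x \<ge> 0"
    and row: "\<forall>u\<in>S. (\<Sum>x\<in>S. K u x) = a u"
    and conn: "\<forall>u\<in>S. \<forall>x\<in>S. (\<lambda>p q. p \<in> S \<and> q \<in> S \<and> K p q > 0)\<^sup>*\<^sup>* u x"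
    and eig: "\<forall>g \<mu>. (\<exists>u\<in>S. g u \<noteq> 0) \<and> (\<forall>u\<in>S. g u - (\<Sum>x\<in>S. K u x * g x) / a u = \<mu> * g u) \<and> \<mu> \<noteq> 0 \<longrightarrow> lam \<le> \<mu>"
    and Cdef: "C = {h. (\<forall>u. u \<notin> S \<longrightarrow> h u = 0) \<and> (\<Sum>u\<in>S. a u * (h u)^2) = 1 \<and> (\<Sum>u\<in>S. a u * h u) = 0}"
    and h0C: "h0 \<in> C" and h0max: "\<forall>h\<in>C. QF S K h \<le> QF S K h0"
  shows "QF S K h0 \<le> 1 - lam"
proof -
  define r where "r = QF S K h0"
  have h0n: "IP S a h0 h0 = 1" and h0m: "IP S a h0 (\<lambda>_. 1) = 0"
    using h0C Cdef unfolding IP_sq IP_one by auto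
  have cmp: "QF S K z \<le> r * IP S a z z" if zm: "IP S a z (\<lambda>_. 1) = 0" for z
  proof (cases "IP S a z z = 0")
    case True
    then have "\<forall>u\<in>S. z u = 0" using IP_zero[OF fin apos] by blast
    then have "QF S K z = 0" unfolding QF_def by simp
    then show ?thesis using True by simp
  next
    case False
    then have np: "IP S a z z > 0" using IP_nonneg[OF apos, of z] by linarith
    note N = normalize_in_C[OF fin apos zm np]
    define zn where "zn = (\<lambda>u. if u \<in> S then z u / sqrt (IP S a z z) else 0)"
    have "zn \<in> C" unfolding Cdef zn_def mem_Collect_eq by (rule N(1))
    then have "QF S K zn \<le> r" using h0max unfolding r_def by blast
    then have "QF S K z / IP S a z z \<le> r" using N(2) unfolding zn_def by simp
    then show ?thesis using np by (simp add: divide_le_eq mult.commute)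
  qed
  have lag: "BF S K h0 h = r * IP S a h0 h" if hm: "IP S a h (\<lambda>_. 1) = 0" for h
  proof -
    have "\<forall>t. (2 * (BF S K h0 h - r * IP S a h0 h)) * t + (QF S K h - r * IP S a h h) * t^2 \<le> 0"
    proof
      fix t
      have "IP S a (\<lambda>u. h0 u + t * h u) (\<lambda>_. 1) = 0" using IP_lin[of S a h0 t h] h0m hm by simp
      then have "QF S K (\<lambda>u. h0 u + t * h u) \<le> r * IP S a (\<lambda>u. h0 u + t * h u) (\<lambda>u. h0 u + t * h u)"
        by (rule cmp)
      then show "(2 * (BF S K h0 h - r * IP S a h0 h)) * t + (QF S K h - r * IP S a h h) * t^2 \<le> 0"
        unfolding QF_expand[OF sym] IP_expand h0n r_def[symmetric] by (simp add: algebra_simps)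
    qed
    from quad_nonpos_lin_zero[OF this] show ?thesis by simp
  qed
  define w where "w = (\<lambda>x. (\<Sum>y\<in>S. K x y * h0 y) / a x - r * h0 x)"
  have wIP: "IP S a w h = BF S K h h0 - r * IP S a h0 h" for h
  proof -
    have "IP S a w h = (\<Sum>x\<in>S. (\<Sum>y\<in>S. K x y * h0 y) * h x - r * (a x * h0 x * h x))"
      unfolding IP_def w_def
    proof (intro sum.cong refl)
      fix x assume "x \<in> S"
      then have "a x \<noteq> 0" using apos by force
      then show "a x * ((\<Sum>y\<in>S. K x y * h0 y) / a x - r * h0 x) * h x = (\<Sum>y\<in>S. K x y * h0 y) * h x - r * (a x * h0 x * h x)"
        by (simp add: field_simps)
    qed
    also have "\<dots> = BF S K h h0 - r * IP S a h0 h"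
      unfolding BF_def IP_def by (simp add: sum_subtractf sum_distrib_left sum_distrib_right mult_ac)
    finally show ?thesis .
  qed
  have w1: "IP S a w (\<lambda>_. 1) = 0"
  proof -
    have "BF S K (\<lambda>_. 1) h0 = (\<Sum>y\<in>S. (\<Sum>x\<in>S. K x y) * h0 y)"
      unfolding BF_def by (subst sum.swap) (simp add: sum_distrib_right)
    also have "\<dots> = (\<Sum>y\<in>S. a y * h0 y)"
      using sym row by (intro sum.cong refl) (metis (no_types, lifting) sum.cong)
    also have "\<dots> = 0" using h0m unfolding IP_one .
    finally have "BF S K (\<lambda>_. 1) h0 = 0" .
    moreover have "IP S a h0 (\<lambda>_. 1) = 0" by (rule h0m)
    ultimately show ?thesis using wIP[of "\<lambda>_. 1"] by simp
  qed
  have "IP S a w w = 0"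
    using wIP[of w] lag[OF w1] BF_sym[OF sym, of w h0] by simp
  then have w0: "\<forall>x\<in>S. w x = 0" using IP_zero[OF fin apos] by blast
  have ex: "\<exists>u\<in>S. h0 u \<noteq> 0"
  proof (rule ccontr)
    assume "\<not> ?thesis"
    then have "IP S a h0 h0 = 0" unfolding IP_def by simp
    then show False using h0n by simp
  qed
  show ?thesis
  proof (cases "r = 1")
    case False
    have "\<forall>u\<in>S. h0 u - (\<Sum>x\<in>S. K u x * h0 x) / a u = (1 - r) * h0 u"
      using w0 unfolding w_def by (auto simp: algebra_simps)
    then have "lam \<le> 1 - r" using eig ex False by auto
    then show ?thesis unfolding r_def by simp
  next
    case True
    have E: "(\<Sum>u\<in>S. \<Sum>x\<in>S. K u x * (h0 u - h0 x)^2) = 0"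
      unfolding energy[OF sym row] h0n using True r_def by simp
    have nnt: "\<forall>u\<in>S. \<forall>x\<in>S. K u x * (h0 u - h0 x)^2 \<ge> 0" using nn by simp
    have nnr: "\<forall>u\<in>S. (\<Sum>x\<in>S. K u x * (h0 u - h0 x)^2) \<ge> 0"
      using nnt by (simp add: sum_nonneg)
    have r0: "\<forall>u\<in>S. (\<Sum>x\<in>S. K u x * (h0 u - h0 x)^2) = 0"
      using sum_nonneg_eq_0_iff[OF fin, of "\<lambda>u. \<Sum>x\<in>S. K u x * (h0 u - h0 x)^2"] E nnr by auto
    have "\<forall>u\<in>S. \<forall>x\<in>S. K u x * (h0 u - h0 x)^2 = 0"
    proof (intro ballI)
      fix u x assume "u \<in> S" "x \<in> S"
      then show "K u x * (h0 u - h0 x)^2 = 0"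
        using sum_nonneg_eq_0_iff[OF fin, of "\<lambda>x. K u x * (h0 u - h0 x)^2"] r0 nnt by auto
    qed
    then have edge: "\<forall>p q. p \<in> S \<and> q \<in> S \<and> K p q > 0 \<longrightarrow> h0 p = h0 q"
      by (metis less_irrefl mult_eq_0_iff power_eq_0_iff right_minus_eq)
    have const: "h0 u = h0 x" if "(\<lambda>p q. p \<in> S \<and> q \<in> S \<and> K p q > 0)\<^sup>*\<^sup>* u x" for u x
      using that by (induction rule: rtranclp_induct) (use edge in auto)
    obtain u0 where u0: "u0 \<in> S" using ex by blast
    have "\<forall>x\<in>S. h0 x = h0 u0"
    proof
      fix x assume "x \<in> S"
      then have "(\<lambda>p q. p \<in> S \<and> q \<in> S \<and> K p q > 0)\<^sup>*\<^sup>* u0 x" using conn u0 by blast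
      then show "h0 x = h0 u0" using const by (metis)
    qed
    then have "IP S a h0 (\<lambda>_. 1) = h0 u0 * (\<Sum>x\<in>S. a x)" unfolding IP_def
      by (simp add: sum_distrib_left mult_ac)
    then have "h0 u0 = 0" using h0m asum by simp
    then have "\<forall>x\<in>S. h0 x = 0" using \<open>\<forall>x\<in>S. h0 x = h0 u0\<close> by simp
    then show ?thesis using ex by auto
  qed
qed



lemma abstract_spectral:
  fixes S :: "'a set" and a :: "'a \<Rightarrow> real" and K :: "'a \<Rightarrow> 'a \<Rightarrow> real" and lam :: real
  assumes fin: "finite S" and apos: "\<forall>u\<in>S. a u > 0" and asum: "(\<Sum>u\<in>S. a u) = 1"
    and sym: "\<forall>u\<in>S. \<forall>x\<in>S. K u x = K x u" and nn: "\<forall>u\<in>S. \<forall>x\<in>S. K u x \<ge> 0"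
    and row: "\<forall>u\<in>S. (\<Sum>x\<in>S. K u x) = a u"
    and conn: "\<forall>u\<in>S. \<forall>x\<in>S. (\<lambda>p q. p \<in> S \<and> q \<in> S \<and> K p q > 0)\<^sup>*\<^sup>* u x"
    and eig: "\<forall>g \<mu>. (\<exists>u\<in>S. g u \<noteq> 0) \<and> (\<forall>u\<in>S. g u - (\<Sum>x\<in>S. K u x * g x) / a u = \<mu> * g u) \<and> \<mu> \<noteq> 0 \<longrightarrow> lam \<le> \<mu>"
  shows "QF S K g \<le> lam * (IP S a g (\<lambda>_. 1))^2 + (1 - lam) * IP S a g g"
proof -
  define C where "C = {h. (\<forall>u. u \<notin> S \<longrightarrow> h u = 0) \<and> (\<Sum>u\<in>S. a u * (h u)^2) = 1 \<and> (\<Sum>u\<in>S. a u * h u) = 0}"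
  have perp: "QF S K h \<le> (1 - lam) * IP S a h h" if hm: "IP S a h (\<lambda>_. 1) = 0" for h
  proof (cases "IP S a h h = 0")
    case True
    then have "\<forall>u\<in>S. h u = 0" using IP_zero[OF fin apos] by blast
    then have "QF S K h = 0" unfolding QF_def by simp
    then show ?thesis using True by simp
  next
    case False
    then have np: "IP S a h h > 0" using IP_nonneg[OF apos, of h] by linarith
    note N = normalize_in_C[OF fin apos hm np]
    define zn where "zn = (\<lambda>u. if u \<in> S then h u / sqrt (IP S a h h) else 0)"
    have znC: "zn \<in> C" unfolding C_def zn_def mem_Collect_eq by (rule N(1))
    then have "C \<noteq> {}" by blast
    from exists_max[OF fin apos this C_def, of K] obtain h0 where
      h0C: "h0 \<in> C" and h0max: "\<forall>h\<in>C. QF S K h \<le> QF S K h0" unfolding QF_def by blast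
    have "QF S K h0 \<le> 1 - lam"
      by (rule max_claim[OF fin apos asum sym nn row conn eig C_def h0C h0max])
    moreover have "QF S K zn \<le> QF S K h0" using h0max znC by blast
    ultimately have "QF S K h / IP S a h h \<le> 1 - lam" using N(2) unfolding zn_def by simp
    then show ?thesis using np by (simp add: divide_le_eq mult.commute)
  qed
  define c where "c = IP S a g (\<lambda>_. 1)"
  define h where "h = (\<lambda>u. g u + (- c) * 1)"
  have I11: "IP S a (\<lambda>_. 1) (\<lambda>_. 1) = 1" unfolding IP_def using asum by simp
  have hm: "IP S a h (\<lambda>_. 1) = 0" unfolding h_def IP_lin c_def I11 by simp
  have g_eq: "g = (\<lambda>u. h u + c * 1)" unfolding h_def by simp
  have BF1: "BF S K h (\<lambda>_. 1) = 0"
  proof -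
    have "BF S K h (\<lambda>_. 1) = (\<Sum>u\<in>S. h u * (\<Sum>x\<in>S. K u x))"
      unfolding BF_def by (simp add: sum_distrib_left mult_ac)
    also have "\<dots> = IP S a h (\<lambda>_. 1)" unfolding IP_def using row by (simp add: mult_ac)
    finally show ?thesis using hm by simp
  qed
  have QF1: "QF S K (\<lambda>_. 1) = 1" unfolding QF_def using row asum by simp
  have "QF S K g = QF S K h + c^2"
    by (subst g_eq, subst QF_expand[OF sym]) (simp add: BF1 QF1)
  moreover have "IP S a g g = IP S a h h + c^2"
    by (subst (1 2) g_eq, subst IP_expand) (simp add: hm I11)
  moreover have "QF S K h \<le> (1 - lam) * IP S a h h" by (rule perp[OF hm])
  ultimately show ?thesis unfolding c_def[symmetric] by (simp add: algebra_simps)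
qed



definition PT :: "'a set set \<Rightarrow> nat \<Rightarrow> ('a set \<Rightarrow> real) \<Rightarrow> 'a \<Rightarrow> real" where
  "PT Y k P u = (\<Sum>\<sigma>\<in>faces Y k. if u \<in> \<sigma> then P \<sigma> else 0)"

definition KC :: "'a set set \<Rightarrow> nat \<Rightarrow> ('a set \<Rightarrow> real) \<Rightarrow> 'a \<Rightarrow> 'a \<Rightarrow> real" where
  "KC Y k P u x = (\<Sum>\<sigma>\<in>faces Y k. if u \<noteq> x \<and> u \<in> \<sigma> \<and> x \<in> \<sigma> then P \<sigma> else 0) / (real k * (real k + 1))"

lemma sum_if_subset:
  assumes "finite V" "A \<subseteq> V"
  shows "(\<Sum>x\<in>V. if x \<in> A then f x else 0) = (\<Sum>x\<in>A. f x)"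
  using sum.inter_restrict[OF assms(1), of f A] assms(2) by (simp add: Int_absorb1)

lemma pc_basic:
  assumes "pure_complex Y k"
  shows "finite Y" "finite (faces Y k)" "\<sigma> \<in> Y \<Longrightarrow> finite \<sigma>" "finite (vertices Y)"
    "\<sigma> \<in> Y \<Longrightarrow> \<tau> \<subseteq> \<sigma> \<Longrightarrow> \<tau> \<in> Y"
proof -
  show fY: "finite Y" using assms unfolding pure_complex_def by blast
  show "finite (faces Y k)" using fY unfolding faces_def by simp
  show "\<sigma> \<in> Y \<Longrightarrow> finite \<sigma>" using assms unfolding pure_complex_def by blast
  show "\<sigma> \<in> Y \<Longrightarrow> \<tau> \<subseteq> \<sigma> \<Longrightarrow> \<tau> \<in> Y" using assms unfolding pure_complex_def by blast
  have "vertices Y \<subseteq> \<Union>Y" unfolding vertices_def by auto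
  moreover have "finite (\<Union>Y)" using fY assms unfolding pure_complex_def by (intro finite_Union) auto
  ultimately show "finite (vertices Y)" by (rule finite_subset)
qed

lemma pc_top:
  assumes "pure_complex Y k" "\<tau> \<in> Y"
  shows "\<exists>\<sigma>\<in>faces Y k. \<tau> \<subseteq> \<sigma>"
proof -
  obtain m where m: "m \<in> Y" "\<tau> \<subseteq> m" "\<forall>b\<in>Y. m \<subseteq> b \<longrightarrow> m = b"
    using finite_has_maximal2[OF pc_basic(1)[OF assms(1)] assms(2)] by blast
  then have "card m = k + 1" using assms(1) unfolding pure_complex_def by blast
  then show ?thesis using m unfolding faces_def by blast
qed

lemma pc_face:
  assumes "pure_complex Y k" "\<sigma> \<in> faces Y k"
  shows "\<sigma> \<subseteq> vertices Y" "card \<sigma> = k + 1" "finite \<sigma>" "\<sigma> \<in> Y"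
proof -
  show "\<sigma> \<in> Y" using assms(2) unfolding faces_def by blast
  then show "\<sigma> \<subseteq> vertices Y" using pc_basic(5)[OF assms(1)] unfolding vertices_def by blast
  show "card \<sigma> = k + 1" using assms(2) unfolding faces_def by blast
  show "finite \<sigma>" using pc_basic(3)[OF assms(1) \<open>\<sigma> \<in> Y\<close>] .
qed

lemma weight_single:
  assumes "pure_complex Y k"
  shows "weight Y k P {u} = PT Y k P u / (real k + 1)"
  unfolding weight_def PT_def using sum.inter_filter[OF pc_basic(2)[OF assms]]
  by (simp add: add.commute)

lemma choose2_real: "real ((k + 1) choose 2) * 2 = real k * (real k + 1)"
proof -
  have ev: "even ((k + 1) * k)" by simp
  have "((k + 1) choose 2) * 2 = (k + 1) * k"
    unfolding choose_two using ev by simp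
  then have "real (((k + 1) choose 2) * 2) = real ((k + 1) * k)" by (simp only:)
  then show ?thesis by (simp add: algebra_simps)
qed

lemma weight_pair:
  assumes "pure_complex Y k" "u \<noteq> x"
  shows "weight Y k P {u, x} = (\<Sum>\<sigma>\<in>faces Y k. if u \<noteq> x \<and> u \<in> \<sigma> \<and> x \<in> \<sigma> then P \<sigma> else 0) / real ((k + 1) choose 2)"
  unfolding weight_def using sum.inter_filter[OF pc_basic(2)[OF assms(1)], of P "\<lambda>\<sigma>. {u, x} \<subseteq> \<sigma>"] assms(2)
  by (simp add: numeral_2_eq_2)



lemma div_rearr:
  fixes S C W g :: real
  shows "S / C / (2 * W) * g = S / (C * 2) * g / W"
  by (simp only: divide_divide_eq_left times_divide_eq_left mult.assoc)

lemma KC_zero_if: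
  assumes "pure_complex Y k" "x \<notin> {x. {x, u} \<in> faces Y 1}"
  shows "KC Y k P u x = 0"
proof -
  have z: "(if u \<noteq> x \<and> u \<in> \<sigma> \<and> x \<in> \<sigma> then P \<sigma> else 0) = 0" if "\<sigma> \<in> faces Y k" for \<sigma>
  proof (cases "u \<noteq> x \<and> u \<in> \<sigma> \<and> x \<in> \<sigma>")
    case True
    then have "{x, u} \<in> Y" by (intro pc_basic(5)[OF assms(1) pc_face(4)[OF assms(1) that]]) auto
    moreover have "card {x, u} = 1 + 1" using True by (subst card_insert_disjoint) auto
    ultimately have False using assms(2) unfolding faces_def by simp
    then show ?thesis by simp
  next
    case False
    show ?thesis by (simp only: if_not_P[OF False])
  qed
  have "(\<Sum>\<sigma>\<in>faces Y k. if u \<noteq> x \<and> u \<in> \<sigma> \<and> x \<in> \<sigma> then P \<sigma> else 0) = 0"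
    by (rule sum.neutral) (use z in blast)
  then show ?thesis unfolding KC_def by simp
qed

lemma adjacency_KC:
  assumes pc: "pure_complex Y k" and k1: "k \<ge> 1"
  shows "adjacency Y k P g u = (\<Sum>x\<in>vertices Y. KC Y k P u x * g x) / weight Y k P {u}"
proof -
  define Nb where "Nb = {x. {x, u} \<in> faces Y 1}"
  define W where "W = weight Y k P {u}"
  have NbV: "Nb \<subseteq> vertices Y"
  proof
    fix x assume "x \<in> Nb"
    then have "{x, u} \<in> Y" unfolding Nb_def faces_def by simp
    then have "{x} \<in> Y" by (rule pc_basic(5)[OF pc]) auto
    then show "x \<in> vertices Y" unfolding vertices_def by simp
  qed
  have fV: "finite (vertices Y)" using pc_basic(4)[OF pc] .
  have C2: "real ((k + 1) choose 2) * 2 = real k * (real k + 1)" by (rule choose2_real)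
  have eq: "weight Y k P {u, x} / (2 * W) * g x = KC Y k P u x * g x / W" if "x \<in> Nb" for x
  proof -
    have "card {x, u} = 2" using that unfolding Nb_def faces_def by simp
    then have xu: "u \<noteq> x" by (cases "x = u") auto
    define S where "S = (\<Sum>\<sigma>\<in>faces Y k. if u \<noteq> x \<and> u \<in> \<sigma> \<and> x \<in> \<sigma> then P \<sigma> else 0)"
    have "weight Y k P {u, x} / (2 * W) * g x = S / real ((k + 1) choose 2) / (2 * W) * g x"
      unfolding weight_pair[OF pc xu] S_def ..
    also have "\<dots> = S / (real ((k + 1) choose 2) * 2) * g x / W"
      by (rule div_rearr)
    also have "\<dots> = KC Y k P u x * g x / W"
      unfolding C2 KC_def S_def ..
    finally show ?thesis .
  qed
  have "adjacency Y k P g u = (\<Sum>x\<in>Nb. weight Y k P {u, x} / (2 * W) * g x)"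
    unfolding adjacency_def Nb_def W_def ..
  also have "\<dots> = (\<Sum>x\<in>Nb. KC Y k P u x * g x / W)"
    using eq by (rule sum.cong[OF refl])
  also have "\<dots> = (\<Sum>x\<in>vertices Y. KC Y k P u x * g x / W)"
  proof (rule sum.mono_neutral_left[OF fV NbV])
    show "\<forall>x\<in>vertices Y - Nb. KC Y k P u x * g x / W = 0"
      using KC_zero_if[OF pc] unfolding Nb_def by auto
  qed
  also have "\<dots> = (\<Sum>x\<in>vertices Y. KC Y k P u x * g x) / W"
    by (simp add: sum_divide_distrib)
  finally show ?thesis unfolding W_def .
qed



lemma G0:
  assumes pc: "pure_complex Y k"
  shows "(\<Sum>x\<in>vertices Y. KC Y k P u x * g x) =
    (\<Sum>\<sigma>\<in>faces Y k. if u \<in> \<sigma> then P \<sigma> * (\<Sum>x\<in>\<sigma> - {u}. g x) else 0) / (real k * (real k + 1))"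
proof -
  define c where "c = real k * (real k + 1)"
  define V where "V = vertices Y"
  define T where "T = faces Y k"
  have fV: "finite V" unfolding V_def using pc_basic(4)[OF pc] .
  have fT: "finite T" unfolding T_def using pc_basic(2)[OF pc] .
  have "(\<Sum>x\<in>V. KC Y k P u x * g x) = (\<Sum>x\<in>V. (\<Sum>\<sigma>\<in>T. (if u \<noteq> x \<and> u \<in> \<sigma> \<and> x \<in> \<sigma> then P \<sigma> else 0) * g x) / c)"
    unfolding KC_def c_def T_def by (intro sum.cong refl) (simp only: times_divide_eq_left sum_distrib_right)
  also have "\<dots> = (\<Sum>x\<in>V. \<Sum>\<sigma>\<in>T. (if u \<noteq> x \<and> u \<in> \<sigma> \<and> x \<in> \<sigma> then P \<sigma> else 0) * g x) / c"
    by (simp only: sum_divide_distrib)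
  also have "(\<Sum>x\<in>V. \<Sum>\<sigma>\<in>T. (if u \<noteq> x \<and> u \<in> \<sigma> \<and> x \<in> \<sigma> then P \<sigma> else 0) * g x) =
      (\<Sum>\<sigma>\<in>T. \<Sum>x\<in>V. (if u \<noteq> x \<and> u \<in> \<sigma> \<and> x \<in> \<sigma> then P \<sigma> else 0) * g x)"
    by (rule sum.swap)
  also have "\<dots> = (\<Sum>\<sigma>\<in>T. if u \<in> \<sigma> then P \<sigma> * (\<Sum>x\<in>\<sigma> - {u}. g x) else 0)"
  proof (rule sum.cong[OF refl])
    fix \<sigma> assume sT: "\<sigma> \<in> T"
    have sV: "\<sigma> - {u} \<subseteq> V" using pc_face(1)[OF pc] sT unfolding T_def V_def by blast
    show "(\<Sum>x\<in>V. (if u \<noteq> x \<and> u \<in> \<sigma> \<and> x \<in> \<sigma> then P \<sigma> else 0) * g x) =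
        (if u \<in> \<sigma> then P \<sigma> * (\<Sum>x\<in>\<sigma> - {u}. g x) else 0)"
    proof (cases "u \<in> \<sigma>")
      case True
      have "(\<Sum>x\<in>V. (if u \<noteq> x \<and> u \<in> \<sigma> \<and> x \<in> \<sigma> then P \<sigma> else 0) * g x) =
          (\<Sum>x\<in>V. if x \<in> \<sigma> - {u} then P \<sigma> * g x else 0)"
        using True by (intro sum.cong refl) auto
      also have "\<dots> = (\<Sum>x\<in>\<sigma> - {u}. P \<sigma> * g x)" by (rule sum_if_subset[OF fV sV])
      also have "\<dots> = P \<sigma> * (\<Sum>x\<in>\<sigma> - {u}. g x)" by (simp only: sum_distrib_left)
      finally show ?thesis using True by simp
    next
      case False
      then show ?thesis by simp
    qed
  qed
  finally show ?thesis unfolding c_def V_def T_def .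
qed

lemma G_rows:
  assumes pc: "pure_complex Y k" and k1: "k \<ge> 1"
  shows "(\<Sum>x\<in>vertices Y. KC Y k P u x) = weight Y k P {u}"
proof -
  have "(\<Sum>x\<in>vertices Y. KC Y k P u x) = (\<Sum>x\<in>vertices Y. KC Y k P u x * (\<lambda>_. 1) x)" by simp
  also have "\<dots> = (\<Sum>\<sigma>\<in>faces Y k. if u \<in> \<sigma> then P \<sigma> * (\<Sum>x\<in>\<sigma> - {u}. (\<lambda>_. 1::real) x) else 0) / (real k * (real k + 1))"
    by (rule G0[OF pc])
  also have "(\<Sum>\<sigma>\<in>faces Y k. if u \<in> \<sigma> then P \<sigma> * (\<Sum>x\<in>\<sigma> - {u}. (\<lambda>_. 1::real) x) else 0) =
      (\<Sum>\<sigma>\<in>faces Y k. real k * (if u \<in> \<sigma> then P \<sigma> else 0))"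
  proof (rule sum.cong[OF refl])
    fix \<sigma> assume sT: "\<sigma> \<in> faces Y k"
    have "u \<in> \<sigma> \<Longrightarrow> card (\<sigma> - {u}) = k"
      using pc_face(2,3)[OF pc sT] by simp
    then show "(if u \<in> \<sigma> then P \<sigma> * (\<Sum>x\<in>\<sigma> - {u}. (\<lambda>_. 1::real) x) else 0) = real k * (if u \<in> \<sigma> then P \<sigma> else 0)"
      by simp
  qed
  also have "\<dots> = real k * PT Y k P u" unfolding PT_def by (simp only: sum_distrib_left)
  finally show ?thesis unfolding weight_single[OF pc] using k1 by simp
qed

lemma G2:
  assumes pc: "pure_complex Y k"
  shows "(\<Sum>u\<in>vertices Y. weight Y k P {u} * g u) = (\<Sum>\<sigma>\<in>faces Y k. P \<sigma> * (\<Sum>u\<in>\<sigma>. g u)) / (real k + 1)"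
proof -
  define V where "V = vertices Y"
  define T where "T = faces Y k"
  have fV: "finite V" unfolding V_def using pc_basic(4)[OF pc] .
  have "(\<Sum>u\<in>V. weight Y k P {u} * g u) = (\<Sum>u\<in>V. (\<Sum>\<sigma>\<in>T. (if u \<in> \<sigma> then P \<sigma> else 0) * g u) / (real k + 1))"
    unfolding weight_single[OF pc] PT_def T_def by (intro sum.cong refl) (simp only: times_divide_eq_left sum_distrib_right)
  also have "\<dots> = (\<Sum>u\<in>V. \<Sum>\<sigma>\<in>T. (if u \<in> \<sigma> then P \<sigma> else 0) * g u) / (real k + 1)"
    by (simp only: sum_divide_distrib)
  also have "(\<Sum>u\<in>V. \<Sum>\<sigma>\<in>T. (if u \<in> \<sigma> then P \<sigma> else 0) * g u) = (\<Sum>\<sigma>\<in>T. \<Sum>u\<in>V. (if u \<in> \<sigma> then P \<sigma> else 0) * g u)"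
    by (rule sum.swap)
  also have "\<dots> = (\<Sum>\<sigma>\<in>T. P \<sigma> * (\<Sum>u\<in>\<sigma>. g u))"
  proof (rule sum.cong[OF refl])
    fix \<sigma> assume sT: "\<sigma> \<in> T"
    have sV: "\<sigma> \<subseteq> V" using pc_face(1)[OF pc] sT unfolding T_def V_def by blast
    have "(\<Sum>u\<in>V. (if u \<in> \<sigma> then P \<sigma> else 0) * g u) = (\<Sum>u\<in>V. if u \<in> \<sigma> then P \<sigma> * g u else 0)"
      by (intro sum.cong refl) simp
    also have "\<dots> = (\<Sum>u\<in>\<sigma>. P \<sigma> * g u)" by (rule sum_if_subset[OF fV sV])
    finally show "(\<Sum>u\<in>V. (if u \<in> \<sigma> then P \<sigma> else 0) * g u) = P \<sigma> * (\<Sum>u\<in>\<sigma>. g u)"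
      by (simp only: sum_distrib_left)
  qed
  finally show ?thesis unfolding V_def T_def .
qed

lemma G1:
  assumes pc: "pure_complex Y k"
  shows "(\<Sum>u\<in>vertices Y. \<Sum>x\<in>vertices Y. KC Y k P u x * g u * g x) =
    (\<Sum>\<sigma>\<in>faces Y k. P \<sigma> * (\<Sum>u\<in>\<sigma>. g u * (\<Sum>x\<in>\<sigma> - {u}. g x))) / (real k * (real k + 1))"
proof -
  define c where "c = real k * (real k + 1)"
  define V where "V = vertices Y"
  define T where "T = faces Y k"
  have fV: "finite V" unfolding V_def using pc_basic(4)[OF pc] .
  have "(\<Sum>u\<in>V. \<Sum>x\<in>V. KC Y k P u x * g u * g x) = (\<Sum>u\<in>V. g u * (\<Sum>x\<in>V. KC Y k P u x * g x))"
    by (intro sum.cong refl) (simp add: sum_distrib_left mult_ac)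
  also have "\<dots> = (\<Sum>u\<in>V. g u * ((\<Sum>\<sigma>\<in>T. if u \<in> \<sigma> then P \<sigma> * (\<Sum>x\<in>\<sigma> - {u}. g x) else 0) / c))"
    unfolding V_def T_def c_def G0[OF pc] ..
  also have "\<dots> = (\<Sum>u\<in>V. \<Sum>\<sigma>\<in>T. (if u \<in> \<sigma> then P \<sigma> * (g u * (\<Sum>x\<in>\<sigma> - {u}. g x)) else 0)) / c"
  proof -
    have gx: "g u * (\<Sum>\<sigma>\<in>T. if u \<in> \<sigma> then P \<sigma> * (\<Sum>x\<in>\<sigma> - {u}. g x) else 0) =
        (\<Sum>\<sigma>\<in>T. if u \<in> \<sigma> then P \<sigma> * (g u * (\<Sum>x\<in>\<sigma> - {u}. g x)) else 0)" for u
      by (simp only: sum_distrib_left) (intro sum.cong refl, simp add: sum_distrib_left mult_ac)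
    have "(\<Sum>u\<in>V. g u * ((\<Sum>\<sigma>\<in>T. if u \<in> \<sigma> then P \<sigma> * (\<Sum>x\<in>\<sigma> - {u}. g x) else 0) / c)) =
        (\<Sum>u\<in>V. (g u * (\<Sum>\<sigma>\<in>T. if u \<in> \<sigma> then P \<sigma> * (\<Sum>x\<in>\<sigma> - {u}. g x) else 0)) / c)"
      by (simp only: times_divide_eq_right)
    also have "\<dots> = (\<Sum>u\<in>V. (\<Sum>\<sigma>\<in>T. if u \<in> \<sigma> then P \<sigma> * (g u * (\<Sum>x\<in>\<sigma> - {u}. g x)) else 0) / c)"
      by (intro sum.cong refl arg_cong[where f="\<lambda>z. z / c"] gx)
    also have "\<dots> = (\<Sum>u\<in>V. \<Sum>\<sigma>\<in>T. (if u \<in> \<sigma> then P \<sigma> * (g u * (\<Sum>x\<in>\<sigma> - {u}. g x)) else 0)) / c"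
      by (rule sum_divide_distrib[symmetric])
    finally show ?thesis .
  qed
  also have "(\<Sum>u\<in>V. \<Sum>\<sigma>\<in>T. (if u \<in> \<sigma> then P \<sigma> * (g u * (\<Sum>x\<in>\<sigma> - {u}. g x)) else 0)) =
     (\<Sum>\<sigma>\<in>T. \<Sum>u\<in>V. (if u \<in> \<sigma> then P \<sigma> * (g u * (\<Sum>x\<in>\<sigma> - {u}. g x)) else 0))"
    by (rule sum.swap)
  also have "\<dots> = (\<Sum>\<sigma>\<in>T. P \<sigma> * (\<Sum>u\<in>\<sigma>. g u * (\<Sum>x\<in>\<sigma> - {u}. g x)))"
  proof (rule sum.cong[OF refl])
    fix \<sigma> assume sT: "\<sigma> \<in> T"
    have sV: "\<sigma> \<subseteq> V" using pc_face(1)[OF pc] sT unfolding T_def V_def by blast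
    show "(\<Sum>u\<in>V. (if u \<in> \<sigma> then P \<sigma> * (g u * (\<Sum>x\<in>\<sigma> - {u}. g x)) else 0)) = P \<sigma> * (\<Sum>u\<in>\<sigma>. g u * (\<Sum>x\<in>\<sigma> - {u}. g x))"
      unfolding sum_if_subset[OF fV sV] by (simp only: sum_distrib_left)
  qed
  finally show ?thesis unfolding V_def T_def c_def .
qed



lemma PT_pos:
  assumes pc: "pure_complex Y k" and pd: "prob_dist Y k P" and u: "u \<in> vertices Y"
  shows "PT Y k P u > 0"
proof -
  have "{u} \<in> Y" using u unfolding vertices_def by simp
  then obtain \<sigma> where sT: "\<sigma> \<in> faces Y k" and us: "u \<in> \<sigma>" using pc_top[OF pc] by blast
  have pos: "\<forall>\<sigma>\<in>faces Y k. P \<sigma> > 0" using pd unfolding prob_dist_def by blast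
  show ?thesis unfolding PT_def
    by (rule sum_pos2[OF pc_basic(2)[OF pc] sT]) (use us pos sT in auto)
qed

lemma KC_props:
  assumes pc: "pure_complex Y k" and pd: "prob_dist Y k P"
  shows "KC Y k P u x = KC Y k P x u" "KC Y k P u x \<ge> 0"
proof -
  show "KC Y k P u x = KC Y k P x u" unfolding KC_def
    by (intro arg_cong2[where f="(/)"] sum.cong refl) auto
  have pos: "\<forall>\<sigma>\<in>faces Y k. P \<sigma> > 0" using pd unfolding prob_dist_def by blast
  show "KC Y k P u x \<ge> 0" unfolding KC_def
    by (intro divide_nonneg_nonneg sum_nonneg) (use pos in \<open>auto simp: less_imp_le\<close>)
qed

lemma complex_spectral:
  assumes pc: "pure_complex Y k" and k1: "k \<ge> 1" and pd: "prob_dist Y k P"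
    and conn: "skeleton_connected Y"
    and eig: "\<forall>\<mu>. laplacian_eigenvalue Y k P \<mu> \<and> \<mu> \<noteq> 0 \<longrightarrow> \<mu> \<ge> lam"
  shows "(\<Sum>\<sigma>\<in>faces Y k. P \<sigma> * (\<Sum>u\<in>\<sigma>. g u * (\<Sum>x\<in>\<sigma> - {u}. g x))) / (real k * (real k + 1))
     \<le> lam * ((\<Sum>\<sigma>\<in>faces Y k. P \<sigma> * (\<Sum>u\<in>\<sigma>. g u)) / (real k + 1))^2
       + (1 - lam) * ((\<Sum>\<sigma>\<in>faces Y k. P \<sigma> * (\<Sum>u\<in>\<sigma>. (g u)^2)) / (real k + 1))"
proof -
  define V where "V = vertices Y"
  define a where "a = (\<lambda>u. weight Y k P {u})"
  define K where "K = KC Y k P"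
  have fin: "finite V" unfolding V_def by (rule pc_basic(4)[OF pc])
  have pos: "\<forall>\<sigma>\<in>faces Y k. P \<sigma> > 0" using pd unfolding prob_dist_def by blast
  have apos: "\<forall>u\<in>V. a u > 0" unfolding a_def V_def weight_single[OF pc]
    using PT_pos[OF pc pd] by (simp add: divide_pos_pos)
  have "(\<Sum>u\<in>V. a u) = (\<Sum>u\<in>V. a u * (\<lambda>_. 1) u)" by simp
  also have "\<dots> = (\<Sum>\<sigma>\<in>faces Y k. P \<sigma> * (\<Sum>u\<in>\<sigma>. (\<lambda>_. 1::real) u)) / (real k + 1)"
    unfolding a_def V_def by (rule G2[OF pc])
  also have "(\<Sum>\<sigma>\<in>faces Y k. P \<sigma> * (\<Sum>u\<in>\<sigma>. (\<lambda>_. 1::real) u)) = (\<Sum>\<sigma>\<in>faces Y k. P \<sigma> * (real k + 1))"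
    by (intro sum.cong refl) (simp add: pc_face(2)[OF pc])
  also have "\<dots> = (real k + 1)" using pd unfolding prob_dist_def by (simp add: sum_distrib_right[symmetric])
  finally have asum: "(\<Sum>u\<in>V. a u) = 1" by simp
  have sym: "\<forall>u\<in>V. \<forall>x\<in>V. K u x = K x u" unfolding K_def using KC_props(1)[OF pc pd] by blast
  have nn: "\<forall>u\<in>V. \<forall>x\<in>V. K u x \<ge> 0" unfolding K_def using KC_props(2)[OF pc pd] by blast
  have row: "\<forall>u\<in>V. (\<Sum>x\<in>V. K u x) = a u" unfolding K_def a_def V_def using G_rows[OF pc k1] by blast
  have edge: "a' \<in> V \<and> b' \<in> V \<and> K a' b' > 0" if e: "{a', b'} \<in> faces Y 1" for a' b'
  proof -
    have eY: "{a', b'} \<in> Y" and c2: "card {a', b'} = 2" using e unfolding faces_def by auto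
    have "{a'} \<in> Y" "{b'} \<in> Y" using pc_basic(5)[OF pc eY] by auto
    then have ab: "a' \<in> V" "b' \<in> V" unfolding V_def vertices_def by auto
    have ne: "a' \<noteq> b'" using c2 by (cases "a' = b'") auto
    obtain \<sigma> where sT: "\<sigma> \<in> faces Y k" and sub: "{a', b'} \<subseteq> \<sigma>" using pc_top[OF pc eY] by blast
    have "(\<Sum>\<sigma>\<in>faces Y k. if a' \<noteq> b' \<and> a' \<in> \<sigma> \<and> b' \<in> \<sigma> then P \<sigma> else 0) > 0"
      by (rule sum_pos2[OF pc_basic(2)[OF pc] sT]) (use ne sub pos sT in \<open>auto simp: less_imp_le\<close>)
    moreover have "real k * (real k + 1) > 0" using k1 by simp
    ultimately have "K a' b' > 0" unfolding K_def KC_def by (rule divide_pos_pos)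
    then show ?thesis using ab by blast
  qed
  have connV: "\<forall>u\<in>V. \<forall>x\<in>V. (\<lambda>p q. p \<in> V \<and> q \<in> V \<and> K p q > 0)\<^sup>*\<^sup>* u x"
  proof (intro ballI)
    fix u x assume "u \<in> V" "x \<in> V"
    then have r: "(\<lambda>a b. {a, b} \<in> faces Y 1)\<^sup>*\<^sup>* u x" using conn unfolding skeleton_connected_def V_def by blast
    have "(\<lambda>a b. {a, b} \<in> faces Y 1) \<le> (\<lambda>p q. p \<in> V \<and> q \<in> V \<and> K p q > 0)" using edge by blast
    then show "(\<lambda>p q. p \<in> V \<and> q \<in> V \<and> K p q > 0)\<^sup>*\<^sup>* u x" using rtranclp_mono r by blast
  qed
  have eigA: "\<forall>g \<mu>. (\<exists>u\<in>V. g u \<noteq> 0) \<and> (\<forall>u\<in>V. g u - (\<Sum>x\<in>V. K u x * g x) / a u = \<mu> * g u) \<and> \<mu> \<noteq> 0 \<longrightarrow> lam \<le> \<mu>"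
  proof (intro allI impI)
    fix g \<mu> assume h: "(\<exists>u\<in>V. g u \<noteq> 0) \<and> (\<forall>u\<in>V. g u - (\<Sum>x\<in>V. K u x * g x) / a u = \<mu> * g u) \<and> \<mu> \<noteq> 0"
    have "laplacian_eigenvalue Y k P \<mu>"
      unfolding laplacian_eigenvalue_def laplacian_def adjacency_KC[OF pc k1]
      using h unfolding V_def K_def a_def by blast
    then show "lam \<le> \<mu>" using eig h by blast
  qed
  have main: "QF V K g \<le> lam * (IP V a g (\<lambda>_. 1))^2 + (1 - lam) * IP V a g g"
    by (rule abstract_spectral[OF fin apos asum sym nn row connV eigA])
  have "QF V K g = (\<Sum>\<sigma>\<in>faces Y k. P \<sigma> * (\<Sum>u\<in>\<sigma>. g u * (\<Sum>x\<in>\<sigma> - {u}. g x))) / (real k * (real k + 1))"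
    unfolding QF_def V_def K_def by (rule G1[OF pc])
  moreover have "IP V a g (\<lambda>_. 1) = (\<Sum>\<sigma>\<in>faces Y k. P \<sigma> * (\<Sum>u\<in>\<sigma>. g u)) / (real k + 1)"
    unfolding IP_one V_def a_def by (rule G2[OF pc])
  moreover have "IP V a g g = (\<Sum>\<sigma>\<in>faces Y k. P \<sigma> * (\<Sum>u\<in>\<sigma>. (g u)^2)) / (real k + 1)"
    unfolding IP_sq V_def a_def by (rule G2[OF pc])
  ultimately show ?thesis using main by simp
qed



lemma I1:
  fixes f :: "'a \<Rightarrow> real"
  assumes "finite A"
  shows "(\<Sum>u\<in>A. f u * (\<Sum>x\<in>A - {u}. f x)) = (\<Sum>u\<in>A. f u)^2 - (\<Sum>u\<in>A. (f u)^2)"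
proof -
  have "(\<Sum>u\<in>A. f u * (\<Sum>x\<in>A - {u}. f x)) = (\<Sum>u\<in>A. f u * (\<Sum>x\<in>A. f x) - (f u)^2)"
  proof (rule sum.cong[OF refl])
    fix u assume "u \<in> A"
    then have "(\<Sum>x\<in>A. f x) = f u + (\<Sum>x\<in>A - {u}. f x)" by (rule sum.remove[OF assms])
    then show "f u * (\<Sum>x\<in>A - {u}. f x) = f u * (\<Sum>x\<in>A. f x) - (f u)^2"
      by (simp add: algebra_simps power2_eq_square)
  qed
  also have "\<dots> = (\<Sum>u\<in>A. f u)^2 - (\<Sum>u\<in>A. (f u)^2)"
    by (simp add: sum_subtractf sum_distrib_right[symmetric] power2_eq_square)
  finally show ?thesis .
qed

lemma I2:
  fixes h :: "'a \<Rightarrow> real"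
  assumes "finite A"
  shows "(\<Sum>v\<in>A. \<Sum>u\<in>A - {v}. h u) = (real (card A) - 1) * (\<Sum>u\<in>A. h u)"
proof -
  have "(\<Sum>v\<in>A. \<Sum>u\<in>A - {v}. h u) = (\<Sum>v\<in>A. (\<Sum>u\<in>A. h u) - h v)"
  proof (rule sum.cong[OF refl])
    fix v assume "v \<in> A"
    then have "(\<Sum>u\<in>A. h u) = h v + (\<Sum>u\<in>A - {v}. h u)" by (rule sum.remove[OF assms])
    then show "(\<Sum>u\<in>A - {v}. h u) = (\<Sum>u\<in>A. h u) - h v" by simp
  qed
  also have "\<dots> = real (card A) * (\<Sum>u\<in>A. h u) - (\<Sum>u\<in>A. h u)"
    by (simp add: sum_subtractf)
  finally show ?thesis by (simp add: algebra_simps)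
qed

lemma C1:
  fixes f :: "'a \<Rightarrow> real"
  assumes "finite A"
  shows "(\<Sum>v\<in>A. \<Sum>u\<in>A - {v}. f u * (\<Sum>x\<in>(A - {v}) - {u}. f x))
       = (real (card A) - 2) * ((\<Sum>u\<in>A. f u)^2 - (\<Sum>u\<in>A. (f u)^2))"
proof -
  define S1 where "S1 = (\<Sum>u\<in>A. f u)"
  define S2 where "S2 = (\<Sum>u\<in>A. (f u)^2)"
  have "(\<Sum>v\<in>A. \<Sum>u\<in>A - {v}. f u * (\<Sum>x\<in>(A - {v}) - {u}. f x))
      = (\<Sum>v\<in>A. (S1 - f v)^2 - (S2 - (f v)^2))"
  proof (rule sum.cong[OF refl])
    fix v assume v: "v \<in> A"
    have fA: "finite (A - {v})" using assms by simp
    have e1: "S1 = f v + (\<Sum>x\<in>A - {v}. f x)" unfolding S1_def by (rule sum.remove[OF assms v])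
    have e2: "S2 = (f v)^2 + (\<Sum>x\<in>A - {v}. (f x)^2)" unfolding S2_def by (rule sum.remove[OF assms v])
    show "(\<Sum>u\<in>A - {v}. f u * (\<Sum>x\<in>(A - {v}) - {u}. f x)) = (S1 - f v)^2 - (S2 - (f v)^2)"
      unfolding I1[OF fA] using e1 e2 by simp
  qed
  also have "\<dots> = (\<Sum>v\<in>A. S1^2 - S2 - 2 * S1 * f v + 2 * (f v)^2)"
    by (intro sum.cong refl) (simp add: power2_diff algebra_simps)
  also have "\<dots> = real (card A) * (S1^2 - S2) - 2 * S1 * S1 + 2 * S2"
    unfolding S1_def S2_def
    by (simp add: sum.distrib sum_subtractf sum_distrib_left[symmetric])
  also have "\<dots> = (real (card A) - 2) * (S1^2 - S2)"
    by (simp add: algebra_simps power2_eq_square)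
  finally show ?thesis unfolding S1_def S2_def .
qed

lemma swapT:
  fixes P :: "'a set \<Rightarrow> real" and h :: "'a set \<Rightarrow> 'a \<Rightarrow> real"
  assumes pc: "pure_complex Y k"
  shows "(\<Sum>v\<in>vertices Y. \<Sum>\<sigma>\<in>faces Y k. if v \<in> \<sigma> then P \<sigma> * h \<sigma> v else 0) =
     (\<Sum>\<sigma>\<in>faces Y k. P \<sigma> * (\<Sum>v\<in>\<sigma>. h \<sigma> v))"
proof -
  have fV: "finite (vertices Y)" using pc_basic(4)[OF pc] .
  have "(\<Sum>v\<in>vertices Y. \<Sum>\<sigma>\<in>faces Y k. if v \<in> \<sigma> then P \<sigma> * h \<sigma> v else 0) =
     (\<Sum>\<sigma>\<in>faces Y k. \<Sum>v\<in>vertices Y. if v \<in> \<sigma> then P \<sigma> * h \<sigma> v else 0)"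
    by (rule sum.swap)
  also have "\<dots> = (\<Sum>\<sigma>\<in>faces Y k. P \<sigma> * (\<Sum>v\<in>\<sigma>. h \<sigma> v))"
  proof (rule sum.cong[OF refl])
    fix \<sigma> assume sT: "\<sigma> \<in> faces Y k"
    have sV: "\<sigma> \<subseteq> vertices Y" by (rule pc_face(1)[OF pc sT])
    show "(\<Sum>v\<in>vertices Y. if v \<in> \<sigma> then P \<sigma> * h \<sigma> v else 0) = P \<sigma> * (\<Sum>v\<in>\<sigma>. h \<sigma> v)"
      unfolding sum_if_subset[OF fV sV] by (simp add: sum_distrib_left)
  qed
  finally show ?thesis .
qed



lemma link_pure:
  assumes pc: "pure_complex X d" and d1: "d \<ge> 1"
  shows "pure_complex (link X {v}) (d - 1)"
proof -
  have fX: "finite X" using pc_basic(1)[OF pc] .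
  have L: "link X {v} = (\<lambda>\<sigma>. \<sigma> - {v}) ` {\<sigma>\<in>X. v \<in> \<sigma>}" unfolding link_def by auto
  have fin: "finite (link X {v})" unfolding L using fX by simp
  have memf: "\<forall>\<eta>\<in>link X {v}. finite \<eta>" unfolding L using pc_basic(3)[OF pc] by auto
  have sub: "\<forall>\<eta>\<in>link X {v}. \<forall>\<tau>. \<tau> \<subseteq> \<eta> \<longrightarrow> \<tau> \<in> link X {v}"
  proof (intro ballI allI impI)
    fix \<eta> \<tau> assume e: "\<eta> \<in> link X {v}" and t: "\<tau> \<subseteq> \<eta>"
    obtain \<sigma> where s: "\<sigma> \<in> X" "v \<in> \<sigma>" "\<eta> = \<sigma> - {v}" using e unfolding L by blast
    have "insert v \<tau> \<subseteq> \<sigma>" using s t by blast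
    then have "insert v \<tau> \<in> X" using pc_basic(5)[OF pc s(1)] by blast
    moreover have "\<tau> = insert v \<tau> - {v}" using s t by blast
    ultimately show "\<tau> \<in> link X {v}" unfolding L by blast
  qed
  have maxi: "\<forall>\<eta>\<in>link X {v}. (\<forall>\<tau>\<in>link X {v}. \<eta> \<subseteq> \<tau> \<longrightarrow> \<tau> = \<eta>) \<longrightarrow> card \<eta> = d - 1 + 1"
  proof (intro ballI impI)
    fix \<eta> assume e: "\<eta> \<in> link X {v}" and m: "\<forall>\<tau>\<in>link X {v}. \<eta> \<subseteq> \<tau> \<longrightarrow> \<tau> = \<eta>"
    obtain \<sigma> where s: "\<sigma> \<in> X" "v \<in> \<sigma>" "\<eta> = \<sigma> - {v}" using e unfolding L by blast
    have "\<forall>\<tau>\<in>X. \<sigma> \<subseteq> \<tau> \<longrightarrow> \<tau> = \<sigma>"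
    proof (intro ballI impI)
      fix \<tau> assume "\<tau> \<in> X" "\<sigma> \<subseteq> \<tau>"
      then have "\<tau> - {v} \<in> link X {v}" "\<eta> \<subseteq> \<tau> - {v}" "v \<in> \<tau>" using s unfolding L by auto
      then have "\<tau> - {v} = \<sigma> - {v}" using m s by blast
      then show "\<tau> = \<sigma>" using \<open>v \<in> \<tau>\<close> s(2) by blast
    qed
    then have "card \<sigma> = d + 1" using pc s(1) unfolding pure_complex_def by blast
    moreover have "finite \<sigma>" using pc_basic(3)[OF pc s(1)] .
    ultimately have "card \<eta> = d" using s by (simp add: card_Diff_singleton)
    then show "card \<eta> = d - 1 + 1" using d1 by simp
  qed
  show ?thesis unfolding pure_complex_def using fin memf sub maxi by blast
qed

lemma link_faces:
  assumes pc: "pure_complex X d" and d1: "d \<ge> 1"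
  shows "faces (link X {v}) (d - 1) = (\<lambda>\<sigma>. \<sigma> - {v}) ` {\<sigma>\<in>faces X d. v \<in> \<sigma>}"
    "inj_on (\<lambda>\<sigma>. \<sigma> - {v}) {\<sigma>\<in>faces X d. v \<in> \<sigma>}"
proof -
  show "inj_on (\<lambda>\<sigma>. \<sigma> - {v}) {\<sigma>\<in>faces X d. v \<in> \<sigma>}"
  proof (rule inj_onI)
    fix a b assume "a \<in> {\<sigma>\<in>faces X d. v \<in> \<sigma>}" "b \<in> {\<sigma>\<in>faces X d. v \<in> \<sigma>}" "a - {v} = b - {v}"
    then show "a = b" by blast
  qed
  show "faces (link X {v}) (d - 1) = (\<lambda>\<sigma>. \<sigma> - {v}) ` {\<sigma>\<in>faces X d. v \<in> \<sigma>}"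
  proof (intro set_eqI iffI)
    fix \<eta> assume "\<eta> \<in> faces (link X {v}) (d - 1)"
    then have e: "\<eta> \<in> link X {v}" "card \<eta> = d" using d1 unfolding faces_def by auto
    obtain \<sigma> where s: "\<sigma> \<in> X" "v \<in> \<sigma>" "\<eta> = \<sigma> - {v}" using e(1) unfolding link_def by blast
    have "finite \<sigma>" using pc_basic(3)[OF pc s(1)] .
    then have "card \<sigma> > 0" using s(2) by (auto simp: card_gt_0_iff)
    then have "card \<sigma> = d + 1" using s e(2) \<open>finite \<sigma>\<close> by (simp add: card_Diff_singleton)
    then show "\<eta> \<in> (\<lambda>\<sigma>. \<sigma> - {v}) ` {\<sigma>\<in>faces X d. v \<in> \<sigma>}" using s unfolding faces_def by blast
  next
    fix \<eta> assume "\<eta> \<in> (\<lambda>\<sigma>. \<sigma> - {v}) ` {\<sigma>\<in>faces X d. v \<in> \<sigma>}"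
    then obtain \<sigma> where s: "\<sigma> \<in> faces X d" "v \<in> \<sigma>" "\<eta> = \<sigma> - {v}" by blast
    have "card \<sigma> = d + 1" "finite \<sigma>" "\<sigma> \<in> X" using pc_face[OF pc s(1)] by auto
    then have "card \<eta> = d - 1 + 1" using s d1 by (simp add: card_Diff_singleton)
    moreover have "\<eta> \<in> link X {v}" unfolding link_def using s \<open>\<sigma> \<in> X\<close> by blast
    ultimately show "\<eta> \<in> faces (link X {v}) (d - 1)" unfolding faces_def by blast
  qed
qed

lemma link_sum:
  fixes F :: "'a set \<Rightarrow> real"
  assumes pc: "pure_complex X d" and d1: "d \<ge> 1"
  shows "(\<Sum>\<eta>\<in>faces (link X {v}) (d - 1). link_dist X d P {v} \<eta> * F \<eta>) =
    (\<Sum>\<sigma>\<in>faces X d. if v \<in> \<sigma> then P \<sigma> * F (\<sigma> - {v}) else 0) / PT X d P v"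
proof -
  have fT: "finite (faces X d)" using pc_basic(2)[OF pc] .
  have D: "(\<Sum>\<sigma>\<in>{\<sigma> \<in> faces X d. {v} \<subseteq> \<sigma>}. P \<sigma>) = PT X d P v"
    unfolding PT_def using sum.inter_filter[OF fT, of P "\<lambda>\<sigma>. {v} \<subseteq> \<sigma>"] by simp
  have "(\<Sum>\<eta>\<in>faces (link X {v}) (d - 1). link_dist X d P {v} \<eta> * F \<eta>) =
      (\<Sum>\<sigma>\<in>{\<sigma>\<in>faces X d. v \<in> \<sigma>}. link_dist X d P {v} (\<sigma> - {v}) * F (\<sigma> - {v}))"
    unfolding link_faces(1)[OF pc d1] by (rule sum.reindex_cong[OF link_faces(2)[OF pc d1] refl refl])
  also have "\<dots> = (\<Sum>\<sigma>\<in>{\<sigma>\<in>faces X d. v \<in> \<sigma>}. P \<sigma> * F (\<sigma> - {v}) / PT X d P v)"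
  proof (rule sum.cong[OF refl])
    fix \<sigma> assume "\<sigma> \<in> {\<sigma>\<in>faces X d. v \<in> \<sigma>}"
    then have "\<sigma> - {v} \<union> {v} = \<sigma>" by blast
    then show "link_dist X d P {v} (\<sigma> - {v}) * F (\<sigma> - {v}) = P \<sigma> * F (\<sigma> - {v}) / PT X d P v"
      unfolding link_dist_def D by simp
  qed
  also have "\<dots> = (\<Sum>\<sigma>\<in>{\<sigma>\<in>faces X d. v \<in> \<sigma>}. P \<sigma> * F (\<sigma> - {v})) / PT X d P v"
    by (rule sum_divide_distrib[symmetric])
  also have "(\<Sum>\<sigma>\<in>{\<sigma>\<in>faces X d. v \<in> \<sigma>}. P \<sigma> * F (\<sigma> - {v})) = (\<Sum>\<sigma>\<in>faces X d. if v \<in> \<sigma> then P \<sigma> * F (\<sigma> - {v}) else 0)"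
    by (rule sum.inter_filter[OF fT])
  finally show ?thesis .
qed

lemma link_prob:
  assumes pc: "pure_complex X d" and d1: "d \<ge> 1" and pd: "prob_dist X d P" and v: "v \<in> vertices X"
  shows "prob_dist (link X {v}) (d - 1) (link_dist X d P {v})"
proof -
  have PTp: "PT X d P v > 0" by (rule PT_pos[OF pc pd v])
  have pos: "\<forall>\<sigma>\<in>faces X d. P \<sigma> > 0" using pd unfolding prob_dist_def by blast
  have fT: "finite (faces X d)" using pc_basic(2)[OF pc] .
  have D: "(\<Sum>\<sigma>\<in>{\<sigma> \<in> faces X d. {v} \<subseteq> \<sigma>}. P \<sigma>) = PT X d P v"
    unfolding PT_def using sum.inter_filter[OF fT, of P "\<lambda>\<sigma>. {v} \<subseteq> \<sigma>"] by simp
  have "\<forall>\<eta>\<in>faces (link X {v}) (d - 1). link_dist X d P {v} \<eta> > 0"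
  proof
    fix \<eta> assume "\<eta> \<in> faces (link X {v}) (d - 1)"
    then obtain \<sigma> where s: "\<sigma> \<in> faces X d" "v \<in> \<sigma>" "\<eta> = \<sigma> - {v}" unfolding link_faces(1)[OF pc d1] by blast
    then have "\<eta> \<union> {v} = \<sigma>" by blast
    then show "link_dist X d P {v} \<eta> > 0" unfolding link_dist_def D using pos s PTp by simp
  qed
  moreover have "(\<Sum>\<eta>\<in>faces (link X {v}) (d - 1). link_dist X d P {v} \<eta>) = 1"
  proof -
    have "(\<Sum>\<eta>\<in>faces (link X {v}) (d - 1). link_dist X d P {v} \<eta>) =
        (\<Sum>\<eta>\<in>faces (link X {v}) (d - 1). link_dist X d P {v} \<eta> * (\<lambda>_. 1) \<eta>)" by simp
    also have "\<dots> = (\<Sum>\<sigma>\<in>faces X d. if v \<in> \<sigma> then P \<sigma> * (\<lambda>_. 1::real) (\<sigma> - {v}) else 0) / PT X d P v"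
      by (rule link_sum[OF pc d1])
    also have "(\<Sum>\<sigma>\<in>faces X d. if v \<in> \<sigma> then P \<sigma> * (\<lambda>_. 1::real) (\<sigma> - {v}) else 0) = PT X d P v"
      unfolding PT_def by (intro sum.cong refl) simp
    finally show ?thesis using PTp by simp
  qed
  ultimately show ?thesis unfolding prob_dist_def by blast
qed



no_syntax
  "_Pi" :: "pttrn \<Rightarrow> 'a set \<Rightarrow> 'b set \<Rightarrow> ('a \<Rightarrow> 'b) set"
    (\<open>(\<open>indent=3 notation=\<open>binder \<Pi>\<in>\<close>\<close>\<Pi> _\<in>_./ _)\<close> 10)

lemma div_cancel_aux: fixes a d p :: real assumes "d > 0" "p \<noteq> 0"
  shows "(a / (d * (d + 1))) / (p / (d + 1)) = a / (d * p)"
proof -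
  have "d + 1 \<noteq> 0" using assms by simp
  then have "(a / (d * (d + 1))) / (p / (d + 1)) = (a / (d * (d + 1))) * ((d + 1) / p)" by simp
  also have "\<dots> = a * (d + 1) / (d * (d + 1) * p)" by simp
  also have "\<dots> = a / (d * p)" using \<open>d + 1 \<noteq> 0\<close> by (simp add: mult.commute mult.left_commute)
  finally show ?thesis .
qed

theorem mainTheorem2:
  fixes X :: "'a set set" and d :: nat and \<Pi> :: "'a set \<Rightarrow> real" and lam :: real
  assumes "pure_complex X d" and "d \<ge> 2" and "prob_dist X d \<Pi>"
    and "skeleton_connected X"
    and "\<forall>v\<in>vertices X. skeleton_connected (link X {v})"
    and "0 < lam" and "lam \<le> 1"
    and "\<forall>v\<in>vertices X. \<forall>\<mu>. laplacian_eigenvalue (link X {v}) (d - 1) (link_dist X d \<Pi> {v}) \<mu>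
            \<and> \<mu> \<noteq> 0 \<longrightarrow> \<mu> \<ge> lam"
  shows "\<forall>\<mu>. laplacian_eigenvalue X d \<Pi> \<mu> \<and> \<mu> \<noteq> 0 \<longrightarrow> \<mu> \<ge> 2 - 1 / lam"
proof (intro allI impI)
  note pc = assms(1) and d2 = assms(2) and pd = assms(3)
  fix \<mu> assume hmu: "laplacian_eigenvalue X d \<Pi> \<mu> \<and> \<mu> \<noteq> 0"
  obtain f where fnz: "\<exists>v\<in>vertices X. f v \<noteq> 0"
    and feq: "\<forall>v\<in>vertices X. laplacian X d \<Pi> f v = \<mu> * f v"
    using hmu unfolding laplacian_eigenvalue_def by blast
  define \<alpha> where "\<alpha> = 1 - \<mu>"
  define V where "V = vertices X"
  define T where "T = faces X d"
  have d1: "d \<ge> 1" using d2 by simp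
  have fV: "finite V" unfolding V_def by (rule pc_basic(4)[OF pc])
  have fT: "finite T" unfolding T_def by (rule pc_basic(2)[OF pc])
  have pos: "\<forall>\<sigma>\<in>T. \<Pi> \<sigma> > 0" using pd unfolding prob_dist_def T_def by blast
  have PTp: "\<forall>v\<in>V. PT X d \<Pi> v > 0" unfolding V_def using PT_pos[OF pc pd] by blast
  have rd: "real (d - 1) = real d - 1" using d1 by (simp add: of_nat_diff)
  have rdp: "real d > 1" using d2 by simp
  define S1 where "S1 = (\<lambda>\<sigma>. \<Sum>u\<in>\<sigma>. f u)"
  define S2 where "S2 = (\<lambda>\<sigma>. \<Sum>u\<in>\<sigma>. (f u)^2)"
  define Qx where "Qx = (\<Sum>\<sigma>\<in>T. \<Pi> \<sigma> * ((S1 \<sigma>)^2 - S2 \<sigma>))"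
  define Nx where "Nx = (\<Sum>\<sigma>\<in>T. \<Pi> \<sigma> * S2 \<sigma>)"
  define A1 where "A1 = (\<lambda>v. \<Sum>\<sigma>\<in>T. if v \<in> \<sigma> then \<Pi> \<sigma> * (\<Sum>u\<in>\<sigma> - {v}. f u * (\<Sum>x\<in>\<sigma> - {v} - {u}. f x)) else 0)"
  define A2 where "A2 = (\<lambda>v. \<Sum>\<sigma>\<in>T. if v \<in> \<sigma> then \<Pi> \<sigma> * (\<Sum>u\<in>\<sigma> - {v}. f u) else 0)"
  define A3 where "A3 = (\<lambda>v. \<Sum>\<sigma>\<in>T. if v \<in> \<sigma> then \<Pi> \<sigma> * (\<Sum>u\<in>\<sigma> - {v}. (f u)^2) else 0)"
  have card_T: "\<forall>\<sigma>\<in>T. card \<sigma> = d + 1 \<and> finite \<sigma>" unfolding T_def using pc_face(2,3)[OF pc] by blast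

  have eigA2: "A2 v = real d * \<alpha> * f v * PT X d \<Pi> v" if v: "v \<in> V" for v
  proof -
    have "adjacency X d \<Pi> f v = \<alpha> * f v" using feq v unfolding laplacian_def \<alpha>_def V_def
      by (auto simp: algebra_simps)
    moreover have "adjacency X d \<Pi> f v = (A2 v / (real d * (real d + 1))) / (PT X d \<Pi> v / (real d + 1))"
      unfolding adjacency_KC[OF pc d1] G0[OF pc] weight_single[OF pc] A2_def T_def ..
    moreover have "(A2 v / (real d * (real d + 1))) / (PT X d \<Pi> v / (real d + 1)) = A2 v / (real d * PT X d \<Pi> v)"
      by (rule div_cancel_aux) (use rdp PTp v in auto)
    ultimately have q: "A2 v / (real d * PT X d \<Pi> v) = \<alpha> * f v" by simp
    have dp: "real d * PT X d \<Pi> v \<noteq> 0" using rdp PTp v by force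
    then show ?thesis using q by (simp add: divide_eq_eq mult_ac)
  qed

  text \<open>Link inequality, multiplied by the vertex weight.\<close>
  have linkI: "A1 v / ((real d - 1) * real d) \<le> lam * \<alpha>^2 * ((f v)^2 * PT X d \<Pi> v) + (1 - lam) * (A3 v / real d)"
    if v: "v \<in> V" for v
  proof -
    have pcl: "pure_complex (link X {v}) (d - 1)" by (rule link_pure[OF pc d1])
    have k1: "d - 1 \<ge> 1" using d2 by simp
    have pdl: "prob_dist (link X {v}) (d - 1) (link_dist X d \<Pi> {v})"
      using link_prob[OF pc d1 pd] v unfolding V_def by blast
    have cl: "skeleton_connected (link X {v})" using assms(5) v unfolding V_def by blast
    have el: "\<forall>\<mu>. laplacian_eigenvalue (link X {v}) (d - 1) (link_dist X d \<Pi> {v}) \<mu> \<and> \<mu> \<noteq> 0 \<longrightarrow> \<mu> \<ge> lam"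
      using assms(8) v unfolding V_def by blast
    note CS = complex_spectral[OF pcl k1 pdl cl el, of f]
    have e1: "(\<Sum>\<eta>\<in>faces (link X {v}) (d - 1). link_dist X d \<Pi> {v} \<eta> * (\<Sum>u\<in>\<eta>. f u * (\<Sum>x\<in>\<eta> - {u}. f x))) = A1 v / PT X d \<Pi> v"
      unfolding A1_def T_def by (rule link_sum[OF pc d1])
    have e2: "(\<Sum>\<eta>\<in>faces (link X {v}) (d - 1). link_dist X d \<Pi> {v} \<eta> * (\<Sum>u\<in>\<eta>. f u)) = A2 v / PT X d \<Pi> v"
      unfolding A2_def T_def by (rule link_sum[OF pc d1])
    have e3: "(\<Sum>\<eta>\<in>faces (link X {v}) (d - 1). link_dist X d \<Pi> {v} \<eta> * (\<Sum>u\<in>\<eta>. (f u)^2)) = A3 v / PT X d \<Pi> v"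
      unfolding A3_def T_def by (rule link_sum[OF pc d1])
    have rd1: "real (d - 1) + 1 = real d" using rd by simp
    have I0: "A1 v / PT X d \<Pi> v / ((real d - 1) * real d) \<le> lam * (A2 v / PT X d \<Pi> v / real d)^2 + (1 - lam) * (A3 v / PT X d \<Pi> v / real d)"
    proof -
      have rd2: "real d - 1 + 1 = real d" by simp
      show ?thesis using CS unfolding e1 e2 e3 rd rd2 .
    qed
    have m: "A2 v / PT X d \<Pi> v / real d = \<alpha> * f v"
    proof -
      have p0: "PT X d \<Pi> v \<noteq> 0" using PTp v by force
      have d0: "real d \<noteq> 0" using rdp by simp
      show ?thesis using eigA2[OF v] p0 d0 by (simp add: field_simps)
    qed
    define p where "p = PT X d \<Pi> v"
    have pp: "p > 0" unfolding p_def using PTp v by blast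
    have I1: "A1 v / p / ((real d - 1) * real d) \<le> lam * (\<alpha> * f v)^2 + (1 - lam) * (A3 v / p / real d)"
      using I0 m unfolding p_def by simp
    have "p * (A1 v / p / ((real d - 1) * real d)) \<le> p * (lam * (\<alpha> * f v)^2 + (1 - lam) * (A3 v / p / real d))"
      by (rule mult_left_mono[OF I1]) (use pp in simp)
    moreover have "p * (A1 v / p / ((real d - 1) * real d)) = A1 v / ((real d - 1) * real d)"
      using pp by simp
    moreover have "p * (lam * (\<alpha> * f v)^2 + (1 - lam) * (A3 v / p / real d)) =
        lam * \<alpha>^2 * ((f v)^2 * p) + (1 - lam) * (A3 v / real d)"
    proof -
      have t1: "p * (lam * (\<alpha> * f v)^2) = lam * \<alpha>^2 * ((f v)^2 * p)" by (simp add: power_mult_distrib mult_ac)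
      have t2: "p * ((1 - lam) * (A3 v / p / real d)) = (1 - lam) * (A3 v / real d)"
      proof -
        have "p * (A3 v / p / real d) = A3 v / real d" using pp by simp
        then show ?thesis by (metis mult.left_commute)
      qed
      show ?thesis unfolding distrib_left t1 t2 ..
    qed
    ultimately show ?thesis unfolding p_def by simp
  qed

  have sA1: "(\<Sum>v\<in>V. A1 v) = (real d - 1) * Qx"
  proof -
    have "(\<Sum>v\<in>V. A1 v) = (\<Sum>\<sigma>\<in>T. \<Pi> \<sigma> * (\<Sum>v\<in>\<sigma>. \<Sum>u\<in>\<sigma> - {v}. f u * (\<Sum>x\<in>\<sigma> - {v} - {u}. f x)))"
      unfolding A1_def V_def T_def by (rule swapT[OF pc])
    also have "\<dots> = (\<Sum>\<sigma>\<in>T. (real d - 1) * (\<Pi> \<sigma> * ((S1 \<sigma>)^2 - S2 \<sigma>)))"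
    proof (rule sum.cong[OF refl])
      fix \<sigma> assume "\<sigma> \<in> T"
      then have c: "card \<sigma> = d + 1" "finite \<sigma>" using card_T by auto
      show "\<Pi> \<sigma> * (\<Sum>v\<in>\<sigma>. \<Sum>u\<in>\<sigma> - {v}. f u * (\<Sum>x\<in>\<sigma> - {v} - {u}. f x)) = (real d - 1) * (\<Pi> \<sigma> * ((S1 \<sigma>)^2 - S2 \<sigma>))"
        unfolding C1[OF c(2)] c(1) S1_def S2_def by (simp add: algebra_simps)
    qed
    finally show ?thesis unfolding Qx_def by (simp add: sum_distrib_left)
  qed
  have sA3: "(\<Sum>v\<in>V. A3 v) = real d * Nx"
  proof -
    have "(\<Sum>v\<in>V. A3 v) = (\<Sum>\<sigma>\<in>T. \<Pi> \<sigma> * (\<Sum>v\<in>\<sigma>. \<Sum>u\<in>\<sigma> - {v}. (f u)^2))"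
      unfolding A3_def V_def T_def by (rule swapT[OF pc])
    also have "\<dots> = (\<Sum>\<sigma>\<in>T. real d * (\<Pi> \<sigma> * S2 \<sigma>))"
    proof (rule sum.cong[OF refl])
      fix \<sigma> assume "\<sigma> \<in> T"
      then have c: "card \<sigma> = d + 1" "finite \<sigma>" using card_T by auto
      show "\<Pi> \<sigma> * (\<Sum>v\<in>\<sigma>. \<Sum>u\<in>\<sigma> - {v}. (f u)^2) = real d * (\<Pi> \<sigma> * S2 \<sigma>)"
        unfolding I2[OF c(2)] c(1) S2_def by (simp add: algebra_simps)
    qed
    finally show ?thesis unfolding Nx_def by (simp add: sum_distrib_left)
  qed
  have sN: "(\<Sum>v\<in>V. (f v)^2 * PT X d \<Pi> v) = Nx"
  proof -
    have "(\<Sum>v\<in>V. (f v)^2 * PT X d \<Pi> v) = (\<Sum>v\<in>V. \<Sum>\<sigma>\<in>T. if v \<in> \<sigma> then \<Pi> \<sigma> * (f v)^2 else 0)"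
      unfolding PT_def T_def by (intro sum.cong refl) (simp add: sum_distrib_left, intro sum.cong refl, simp)
    also have "\<dots> = (\<Sum>\<sigma>\<in>T. \<Pi> \<sigma> * (\<Sum>v\<in>\<sigma>. (f v)^2))"
      unfolding V_def T_def by (rule swapT[OF pc])
    finally show ?thesis unfolding Nx_def S2_def .
  qed
  have sQ: "(\<Sum>v\<in>V. f v * A2 v) = Qx"
  proof -
    have "(\<Sum>v\<in>V. f v * A2 v) = (\<Sum>v\<in>V. \<Sum>\<sigma>\<in>T. if v \<in> \<sigma> then \<Pi> \<sigma> * (f v * (\<Sum>u\<in>\<sigma> - {v}. f u)) else 0)"
      unfolding A2_def by (intro sum.cong refl) (simp add: sum_distrib_left, intro sum.cong refl, simp add: mult_ac)
    also have "\<dots> = (\<Sum>\<sigma>\<in>T. \<Pi> \<sigma> * (\<Sum>v\<in>\<sigma>. f v * (\<Sum>u\<in>\<sigma> - {v}. f u)))"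
      unfolding V_def T_def by (rule swapT[OF pc])
    also have "\<dots> = Qx" unfolding Qx_def
    proof (rule sum.cong[OF refl])
      fix \<sigma> assume "\<sigma> \<in> T"
      then have c: "finite \<sigma>" using card_T by auto
      show "\<Pi> \<sigma> * (\<Sum>v\<in>\<sigma>. f v * (\<Sum>u\<in>\<sigma> - {v}. f u)) = \<Pi> \<sigma> * ((S1 \<sigma>)^2 - S2 \<sigma>)"
        unfolding I1[OF c] S1_def S2_def ..
    qed
    finally show ?thesis .
  qed

  have QxN: "Qx = real d * \<alpha> * Nx"
  proof -
    have "(\<Sum>v\<in>V. f v * A2 v) = (\<Sum>v\<in>V. real d * \<alpha> * ((f v)^2 * PT X d \<Pi> v))"
      using eigA2 by (intro sum.cong refl) (simp add: power2_eq_square mult_ac)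
    also have "\<dots> = real d * \<alpha> * (\<Sum>v\<in>V. (f v)^2 * PT X d \<Pi> v)" by (rule sum_distrib_left[symmetric])
    finally show ?thesis using sQ sN by simp
  qed
  have Nxp: "Nx > 0"
  proof -
    obtain v0 where v0: "v0 \<in> V" "f v0 \<noteq> 0" using fnz unfolding V_def by blast
    have "(\<Sum>v\<in>V. (f v)^2 * PT X d \<Pi> v) > 0"
      by (rule sum_pos2[OF fV v0(1)]) (use v0 PTp in \<open>auto intro: mult_nonneg_nonneg less_imp_le\<close>)
    then show ?thesis using sN by simp
  qed
  have QxB: "Qx \<le> real d * Nx"
  proof -
    have "\<Pi> \<sigma> * ((S1 \<sigma>)^2 - S2 \<sigma>) \<le> real d * (\<Pi> \<sigma> * S2 \<sigma>)" if "\<sigma> \<in> T" for \<sigma>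
    proof -
      have c: "card \<sigma> = d + 1" using card_T that by auto
      have "(S1 \<sigma>)^2 \<le> S2 \<sigma> * real (card \<sigma>)" unfolding S1_def S2_def by (rule sum_squared_le_sum_of_squares)
      then have "(S1 \<sigma>)^2 - S2 \<sigma> \<le> real d * S2 \<sigma>" unfolding c by (simp add: algebra_simps)
      then have "\<Pi> \<sigma> * ((S1 \<sigma>)^2 - S2 \<sigma>) \<le> \<Pi> \<sigma> * (real d * S2 \<sigma>)"
        using pos that by (simp add: mult_left_mono less_imp_le)
      then show ?thesis by (simp add: mult_ac)
    qed
    then have "Qx \<le> (\<Sum>\<sigma>\<in>T. real d * (\<Pi> \<sigma> * S2 \<sigma>))" unfolding Qx_def by (rule sum_mono)
    then show ?thesis unfolding Nx_def by (simp add: sum_distrib_left)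
  qed
  have sumI: "(\<Sum>v\<in>V. A1 v / ((real d - 1) * real d)) \<le> (\<Sum>v\<in>V. lam * \<alpha>^2 * ((f v)^2 * PT X d \<Pi> v) + (1 - lam) * (A3 v / real d))"
    using linkI by (rule sum_mono)
  have lhs: "(\<Sum>v\<in>V. A1 v / ((real d - 1) * real d)) = Qx / real d"
  proof -
    have "(\<Sum>v\<in>V. A1 v / ((real d - 1) * real d)) = (\<Sum>v\<in>V. A1 v) / ((real d - 1) * real d)"
      by (rule sum_divide_distrib[symmetric])
    also have "\<dots> = ((real d - 1) * Qx) / ((real d - 1) * real d)" unfolding sA1 ..
    also have "\<dots> = Qx / real d" using rdp by simp
    finally show ?thesis .
  qed
  have rhs: "(\<Sum>v\<in>V. lam * \<alpha>^2 * ((f v)^2 * PT X d \<Pi> v) + (1 - lam) * (A3 v / real d)) = lam * \<alpha>^2 * Nx + (1 - lam) * Nx"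
    using sA3 sN rdp by (simp add: sum.distrib sum_distrib_left[symmetric] sum_divide_distrib[symmetric])
  have key: "\<alpha> * Nx \<le> lam * \<alpha>^2 * Nx + (1 - lam) * Nx"
    using sumI unfolding lhs rhs QxN using rdp by simp
  have key2: "\<alpha> \<le> lam * \<alpha>^2 + (1 - lam)"
  proof -
    have "\<alpha> * Nx \<le> (lam * \<alpha>^2 + (1 - lam)) * Nx" using key by (simp add: algebra_simps)
    then show ?thesis using Nxp by simp
  qed
  have a1: "\<alpha> \<le> 1" using QxB QxN Nxp rdp by simp
  have a1': "\<alpha> < 1" using a1 hmu unfolding \<alpha>_def by simp
  have prod: "(\<alpha> - 1) * (lam * \<alpha> + lam - 1) \<ge> 0"
    using key2 by (simp add: algebra_simps power2_eq_square)
  have lin: "lam * \<alpha> + lam - 1 \<le> 0"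
  proof (rule ccontr)
    assume "\<not> ?thesis"
    then have "(\<alpha> - 1) * (lam * \<alpha> + lam - 1) < 0" using a1' by (simp add: mult_neg_pos)
    then show False using prod by simp
  qed
  have "lam * (2 - \<mu>) \<le> 1" using lin unfolding \<alpha>_def by (simp add: algebra_simps)
  then have "2 - \<mu> \<le> 1 / lam" using assms(6) by (simp add: field_simps)
  then show "\<mu> \<ge> 2 - 1 / lam" by simp
qed

end
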